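(* Let $k\ge1$ and let $(Z_{\mathbf j})_{\mathbf j\ge\mathbf 1}$, $\mathbf j\in(\mathbb N^* )^k$, be random variables with values in a Polish space such that almost surely $Z_{\mathbf j}=\tau((U_{\mathbf j\odot\mathbf e})_{\mathbf e\in\{0,1\}^k\setminus\{\mathbf 0\}})$ for all $\mathbf j$, where $(U_{\mathbf c})_{\mathbf c\in\mathbb N^k\setminus\{\mathbf 0\}}$ are mutually independent uniform $[0,1]$ variables and $\tau$ is measurable. Let $\mathcal G$ be a pointwise measurable class of functions $g$ with $g(Z_{\mathbf 1})$ integrable, and let $\Phi:\mathbb R^+\to\mathbb R$ be non-decreasing and convex. Then for every $\mathbf C=(C_1,\dots,C_k)\in(\mathbb N^* )^k$, $$E\Big[\Phi\Big(\sup_{g\in\mathcal G}\Big|\frac1{\Pi_C}\sum_{\mathbf 1\le\mathbf j\le\mathbf C}g(Z_{\mathbf j})-E[g(Z_{\mathbf 1})]\Big|\Big)\Big]\le\frac1{2^k-1}\sum_{\mathbf e\in\{0,1\}^k\setminus\{\mathbf 0\}}E\Big[\Phi\Big(2(2^k-1)\sup_{g\in\mathcal G}\Big|\frac1{\Pi_C}\sum_{\mathbf 1\le\mathbf j\le\mathbf C}\epsilon_{\mathbf j\odot\mathbf e}\,g(Z_{\mathbf j})\Big|\Big)\Big],$$ where $(\epsilon_{\mathbf c})_{\mathbf c\in\mathbb N^k}$ are i.i.d. Rademacher variables ($P(\epsilon=1)=P(\epsilon=-1)=1/2$) independent of $(Z_{\mathbf j})_{\mathbf j\ge\mathbf 1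}$.
   Context: $\odot$ is the componentwise product of $k$-tuples, $\mathbf 0,\mathbf 1$ the constant $k$-tuples, $\le$ the componentwise order, $\Pi_C=\prod_iC_i$. A class $\mathcal G$ is pointwise measurable if it contains a countable subclass such that every element of $\mathcal G$ is a pointwise limit of elements of the subclass. *)

theory Defs
  imports "HOL-Probability.Probability"
begin

definition odot :: "('k \<Rightarrow> nat) \<Rightarrow> ('k \<Rightarrow> nat) \<Rightarrow> ('k \<Rightarrow> nat)" where
  "odot j e = (\<lambda>i. j i * e i)"

definition pointwise_measurable :: "('b \<Rightarrow> real) set \<Rightarrow> bool" where
  "pointwise_measurable G \<longleftrightarrow>
     (\<exists>G0 \<subseteq> G. countable G0 \<and>
        (\<forall>g\<in>G. \<exists>s. (\<forall>n. s n \<in> G0) \<and> (\<forall>x. (\<lambda>n. s n x) \<longlonglongrightarrow> g x)))"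

text \<open>Extension of \<Phi> : [0,\<infinity>) \<rightarrow> \<real> to [0,\<infinity>] (value at \<infinity> = supremum, i.e. the limit,
  since \<Phi> is non-decreasing).\<close>
definition Phi_ext :: "(real \<Rightarrow> real) \<Rightarrow> ennreal \<Rightarrow> ereal" where
  "Phi_ext \<Phi> x = (if x = \<top> then (SUP t\<in>{0..}. ereal (\<Phi> t)) else ereal (\<Phi> (enn2real x)))"

text \<open>Expectation (in (-\<infinity>,\<infinity>]) of a random variable bounded below by c.\<close>
definition lexp :: "'a measure \<Rightarrow> real \<Rightarrow> ('a \<Rightarrow> ereal) \<Rightarrow> ereal" where
  "lexp M c Y = ereal c + enn2ereal (\<integral>\<^sup>+ \<omega>. e2ennreal (Y \<omega> - ereal c) \<partial>M)"

end

theory Submission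
  imports Defs
begin

definition psi :: "(real \<Rightarrow> real) \<Rightarrow> ennreal \<Rightarrow> ennreal" where
  "psi \<Phi> x = e2ennreal (Phi_ext \<Phi> x - ereal (\<Phi> 0))"

lemma psi_ennreal: "t \<ge> 0 \<Longrightarrow> psi \<Phi> (ennreal t) = ennreal (\<Phi> t - \<Phi> 0)"
  by (simp add: psi_def Phi_ext_def)

lemma psi_mono:
  assumes "mono_on {0..} \<Phi>"
  shows "mono (psi \<Phi>)"
proof (rule monoI)
  fix x y :: ennreal assume xy: "x \<le> y"
  have "Phi_ext \<Phi> x \<le> Phi_ext \<Phi> y"
  proof (cases "y = \<top>")
    case True
    show ?thesis
    proof (cases "x = \<top>")
      case False
      then show ?thesis using True
        by (auto simp: Phi_ext_def intro!: SUP_upper2[of "enn2real x"])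
    qed (simp add: True)
  next
    case False
    then have "x \<noteq> \<top>" using xy top_unique by auto
    with False xy show ?thesis
      by (auto simp: Phi_ext_def less_top intro!: mono_onD[OF assms] enn2real_mono)
  qed
  then show "psi \<Phi> x \<le> psi \<Phi> y"
    unfolding psi_def by (intro e2ennreal_mono ereal_minus_mono) auto
qed

lemma psi_top: "psi \<Phi> \<top> \<le> (SUP t\<in>{0::real..}. psi \<Phi> (ennreal t))"
proof -
  have "(SUP t\<in>{0..}. ereal (\<Phi> t)) \<le> enn2ereal (SUP t\<in>{0::real..}. psi \<Phi> (ennreal t)) + ereal (\<Phi> 0)"
  proof (rule SUP_least)
    fix t :: real assume t: "t \<in> {0..}"
    have "ennreal (\<Phi> t - \<Phi> 0) \<le> (SUP t\<in>{0::real..}. psi \<Phi> (ennreal t))"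
      using t by (intro SUP_upper2[of t]) (auto simp: psi_ennreal)
    then have "enn2ereal (ennreal (\<Phi> t - \<Phi> 0)) \<le> enn2ereal (SUP t\<in>{0::real..}. psi \<Phi> (ennreal t))"
      by (metis less_eq_ennreal.rep_eq)
    moreover have "ereal (\<Phi> t - \<Phi> 0) \<le> enn2ereal (ennreal (\<Phi> t - \<Phi> 0))"
      by (cases "\<Phi> t - \<Phi> 0 \<ge> 0") (auto simp: ennreal_neg zero_ennreal.rep_eq)
    ultimately have "ereal (\<Phi> t - \<Phi> 0) \<le> enn2ereal (SUP t\<in>{0::real..}. psi \<Phi> (ennreal t))"
      by order
    then show "ereal (\<Phi> t) \<le> enn2ereal (SUP t\<in>{0::real..}. psi \<Phi> (ennreal t)) + ereal (\<Phi> 0)"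
      using ereal_minus_le[of "ereal (\<Phi> 0)" "ereal (\<Phi> t)"] by simp
  qed
  then have "(SUP t\<in>{0..}. ereal (\<Phi> t)) - ereal (\<Phi> 0) \<le> enn2ereal (SUP t\<in>{0::real..}. psi \<Phi> (ennreal t))"
    by (simp add: ereal_minus_le)
  then have "e2ennreal ((SUP t\<in>{0..}. ereal (\<Phi> t)) - ereal (\<Phi> 0)) \<le> e2ennreal (enn2ereal (SUP t\<in>{0::real..}. psi \<Phi> (ennreal t)))"
    by (rule e2ennreal_mono)
  then show ?thesis by (simp add: psi_def Phi_ext_def)
qed

lemma convex_ext:
  fixes \<Phi> :: "real \<Rightarrow> real"
  assumes mono: "mono_on {0..} \<Phi>" and conv: "convex_on {0..} \<Phi>"
  shows "convex_on UNIV (\<lambda>x. \<Phi> (max 0 x))"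
proof (rule convex_onI)
  fix t x y :: real assume t: "0 < t" "t < 1"
  have "max 0 ((1 - t) *\<^sub>R x + t *\<^sub>R y) \<le> (1 - t) *\<^sub>R max 0 x + t *\<^sub>R max 0 y"
    using t mult_pos_neg[of t y] mult_pos_neg[of "1-t" x] mult_nonneg_nonneg[of t y] mult_nonneg_nonneg[of "1-t" x]
    by (auto simp: max_def)
  then have "\<Phi> (max 0 ((1 - t) *\<^sub>R x + t *\<^sub>R y)) \<le> \<Phi> ((1 - t) *\<^sub>R max 0 x + t *\<^sub>R max 0 y)"
    using t by (intro mono_onD[OF mono]) auto
  also have "\<dots> \<le> (1 - t) * \<Phi> (max 0 x) + t * \<Phi> (max 0 y)"
    using t by (intro convex_onD[OF conv]) auto
  finally show "\<Phi> (max 0 ((1 - t) *\<^sub>R x + t *\<^sub>R y)) \<le> (1 - t) * \<Phi> (max 0 x) + t * \<Phi> (max 0 y)" .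
qed auto

lemma mono_ext:
  fixes \<Phi> :: "real \<Rightarrow> real"
  assumes mono: "mono_on {0..} \<Phi>"
  shows "mono (\<lambda>x. \<Phi> (max 0 x))"
  by (rule monoI) (auto intro!: mono_onD[OF mono] max.mono)

lemma psi_jensen_fin:
  assumes mono: "mono_on {0..} \<Phi>" and conv: "convex_on {0..} \<Phi>"
    and Q: "prob_space Q" and f[measurable]: "f \<in> borel_measurable Q"
    and fin: "(\<integral>\<^sup>+x. f x \<partial>Q) < \<top>"
  shows "psi \<Phi> (\<integral>\<^sup>+x. f x \<partial>Q) \<le> (\<integral>\<^sup>+x. psi \<Phi> (f x) \<partial>Q)"
proof -
  interpret prob_space Q by fact
  define fr where "fr x = enn2real (f x)" for x
  define q where "q x = \<Phi> (max 0 x)" for x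
  have [measurable]: "fr \<in> borel_measurable Q" unfolding fr_def by measurable
  have qm[measurable]: "q \<in> borel_measurable borel"
    unfolding q_def by (rule borel_measurable_mono[OF mono_ext[OF mono]])
  have ae: "AE x in Q. f x = ennreal (fr x)"
    using nn_integral_PInf_AE[OF f] fin by (auto simp: fr_def less_top)
  have eqf: "(\<integral>\<^sup>+x. f x \<partial>Q) = (\<integral>\<^sup>+x. ennreal (fr x) \<partial>Q)"
    using ae by (rule nn_integral_cong_AE)
  have fr0: "\<And>x. fr x \<ge> 0" by (simp add: fr_def)
  have int: "integrable Q fr"
    using fin eqf fr0 by (intro integrableI_nonneg) (auto simp: less_top)
  have eqf2: "(\<integral>\<^sup>+x. f x \<partial>Q) = ennreal (expectation fr)"
    using eqf nn_integral_eq_integral[OF int] fr0 by simp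
  have e0: "expectation fr \<ge> 0" using fr0 by (simp add: integral_nonneg_AE)
  have rhs: "(\<integral>\<^sup>+x. psi \<Phi> (f x) \<partial>Q) = (\<integral>\<^sup>+x. ennreal (q (fr x) - \<Phi> 0) \<partial>Q)"
    using ae by (intro nn_integral_cong_AE) (auto simp: psi_ennreal fr0 q_def elim!: eventually_mono)
  have lhs: "psi \<Phi> (\<integral>\<^sup>+x. f x \<partial>Q) = ennreal (q (expectation fr) - \<Phi> 0)"
    using e0 by (simp add: eqf2 psi_ennreal q_def)
  show ?thesis
  proof (cases "integrable Q (\<lambda>x. q (fr x))")
    case True
    have "q (expectation fr) \<le> expectation (\<lambda>x. q (fr x))"
      by (rule jensens_inequality[where I=UNIV and a=0 and b=0])
        (use int True convex_ext[OF mono conv] in \<open>auto simp: q_def\<close>)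
    also have "\<dots> - \<Phi> 0 = expectation (\<lambda>x. q (fr x) - \<Phi> 0)"
      using True by (simp add: prob_space)
    finally have "q (expectation fr) - \<Phi> 0 \<le> expectation (\<lambda>x. q (fr x) - \<Phi> 0)" by simp
    moreover have "ennreal (expectation (\<lambda>x. q (fr x) - \<Phi> 0)) = (\<integral>\<^sup>+x. ennreal (q (fr x) - \<Phi> 0) \<partial>Q)"
      using True fr0 by (intro nn_integral_eq_integral[symmetric])
        (auto simp: q_def intro!: mono_onD[OF mono])
    ultimately show ?thesis unfolding lhs rhs by (metis ennreal_leI)
  next
    case False
    have "(\<integral>\<^sup>+x. ennreal (norm (q (fr x))) \<partial>Q) = \<top>"
      using False unfolding integrable_iff_bounded by (simp add: less_top[symmetric])
    moreover have "(\<integral>\<^sup>+x. ennreal (norm (q (fr x))) \<partial>Q) \<le> (\<integral>\<^sup>+x. ennreal (q (fr x) - \<Phi> 0) + ennreal (2 * \<bar>\<Phi> 0\<bar>) \<partial>Q)"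
    proof (rule nn_integral_mono)
      fix x
      have "q (fr x) \<ge> \<Phi> 0" using fr0 by (auto simp: q_def intro!: mono_onD[OF mono])
      then have "norm (q (fr x)) \<le> (q (fr x) - \<Phi> 0) + 2 * \<bar>\<Phi> 0\<bar>" by auto
      then show "ennreal (norm (q (fr x))) \<le> ennreal (q (fr x) - \<Phi> 0) + ennreal (2 * \<bar>\<Phi> 0\<bar>)"
        using \<open>q (fr x) \<ge> \<Phi> 0\<close> by (simp add: ennreal_plus[symmetric] del: ennreal_plus)
    qed
    moreover have "(\<integral>\<^sup>+x. ennreal (q (fr x) - \<Phi> 0) + ennreal (2 * \<bar>\<Phi> 0\<bar>) \<partial>Q)
        = (\<integral>\<^sup>+x. ennreal (q (fr x) - \<Phi> 0) \<partial>Q) + ennreal (2 * \<bar>\<Phi> 0\<bar>)"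
      by (subst nn_integral_add) (auto simp: emeasure_space_1)
    ultimately have "(\<integral>\<^sup>+x. ennreal (q (fr x) - \<Phi> 0) \<partial>Q) = \<top>"
      by (metis ennreal_add_eq_top ennreal_neq_top top_unique)
    then show ?thesis unfolding rhs by simp
  qed
qed

lemma min_SUP_nat_ennreal: "(SUP n. min (a::ennreal) (of_nat n)) = a"
proof -
  have "(SUP n. min a (of_nat n)) = min a (SUP n. of_nat n :: ennreal)"
    using inf_SUP[of a "\<lambda>n::nat. of_nat n :: ennreal" UNIV] by (simp add: inf_min)
  then show ?thesis by (simp add: ennreal_SUP_of_nat_eq_top)
qed

lemma psi_jensen:
  assumes mono: "mono_on {0..} \<Phi>" and conv: "convex_on {0..} \<Phi>"
    and Q: "prob_space Q" and f[measurable]: "f \<in> borel_measurable Q"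
  shows "psi \<Phi> (\<integral>\<^sup>+x. f x \<partial>Q) \<le> (\<integral>\<^sup>+x. psi \<Phi> (f x) \<partial>Q)"
proof (cases "(\<integral>\<^sup>+x. f x \<partial>Q) < \<top>")
  case True
  then show ?thesis using psi_jensen_fin[OF assms] by simp
next
  case False
  then have top: "(\<integral>\<^sup>+x. f x \<partial>Q) = \<top>" using top.not_eq_extremum by blast
  interpret prob_space Q by fact
  define fn where "fn n x = min (f x) (of_nat n)" for n :: nat and x
  have [measurable]: "fn n \<in> borel_measurable Q" for n unfolding fn_def by measurable
  have "(SUP n. \<integral>\<^sup>+x. fn n x \<partial>Q) = (\<integral>\<^sup>+x. (SUP n. fn n x) \<partial>Q)"
    by (rule nn_integral_monotone_convergence_SUP[symmetric])
       (auto simp: incseq_def le_fun_def fn_def min.coboundedI2)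
  also have "\<dots> = \<top>" unfolding fn_def min_SUP_nat_ennreal top ..
  finally have supt: "(SUP n. \<integral>\<^sup>+x. fn n x \<partial>Q) = \<top>" .
  have "psi \<Phi> \<top> \<le> (SUP t\<in>{0::real..}. psi \<Phi> (ennreal t))" by (rule psi_top)
  also have "\<dots> \<le> (\<integral>\<^sup>+x. psi \<Phi> (f x) \<partial>Q)"
  proof (rule SUP_least)
    fix t :: real assume "t \<in> {0..}"
    have "ennreal t < (SUP n. \<integral>\<^sup>+x. fn n x \<partial>Q)" unfolding supt by simp
    then obtain n where n: "ennreal t < (\<integral>\<^sup>+x. fn n x \<partial>Q)" by (auto simp: less_SUP_iff)
    have "(\<integral>\<^sup>+x. fn n x \<partial>Q) \<le> (\<integral>\<^sup>+x. of_nat n \<partial>Q)"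
      by (intro nn_integral_mono) (simp add: fn_def)
    also have "\<dots> < \<top>" by (simp add: emeasure_space_1 of_nat_less_top)
    finally have fin: "(\<integral>\<^sup>+x. fn n x \<partial>Q) < \<top>" .
    have "psi \<Phi> (ennreal t) \<le> psi \<Phi> (\<integral>\<^sup>+x. fn n x \<partial>Q)"
      using n by (intro monoD[OF psi_mono[OF mono]]) simp
    also have "\<dots> \<le> (\<integral>\<^sup>+x. psi \<Phi> (fn n x) \<partial>Q)"
      by (rule psi_jensen_fin[OF mono conv Q _ fin]) simp
    also have "\<dots> \<le> (\<integral>\<^sup>+x. psi \<Phi> (f x) \<partial>Q)"
      by (intro nn_integral_mono monoD[OF psi_mono[OF mono]]) (simp add: fn_def)
    finally show "psi \<Phi> (ennreal t) \<le> (\<integral>\<^sup>+x. psi \<Phi> (f x) \<partial>Q)" .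
  qed
  finally show ?thesis unfolding top .
qed

lemma psi_avg:
  assumes mono: "mono_on {0..} \<Phi>" and conv: "convex_on {0..} \<Phi>"
    and A: "finite A" "A \<noteq> {}"
  shows "psi \<Phi> ((\<Sum>a\<in>A. y a) / of_nat (card A)) \<le> (\<Sum>a\<in>A. psi \<Phi> (y a)) / of_nat (card A)"
proof -
  have "psi \<Phi> (\<integral>\<^sup>+a. y a \<partial>measure_pmf (pmf_of_set A)) \<le> (\<integral>\<^sup>+a. psi \<Phi> (y a) \<partial>measure_pmf (pmf_of_set A))"
    by (rule psi_jensen[OF mono conv]) (auto simp: measure_pmf.prob_space_axioms)
  then show ?thesis using A by (simp add: nn_integral_pmf_of_set)
qed

lemma sup_G0:
  assumes G0: "G0 \<subseteq> G" "\<forall>g\<in>G. \<exists>s. (\<forall>n. s n \<in> G0) \<and> (\<forall>x. (\<lambda>n. s n x) \<longlonglongrightarrow> g x)"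
    and cont: "\<And>h s. (\<forall>x. (\<lambda>n. s n x) \<longlonglongrightarrow> h x) \<Longrightarrow> (\<lambda>n. \<Delta> (s n)) \<longlonglongrightarrow> \<Delta> h"
  shows "(SUP g\<in>G. ennreal \<bar>\<Delta> g\<bar>) = (SUP g\<in>G0. ennreal \<bar>\<Delta> g\<bar>)"
proof (rule antisym)
  show "(SUP g\<in>G0. ennreal \<bar>\<Delta> g\<bar>) \<le> (SUP g\<in>G. ennreal \<bar>\<Delta> g\<bar>)"
    using G0(1) by (rule SUP_subset_mono) simp
  show "(SUP g\<in>G. ennreal \<bar>\<Delta> g\<bar>) \<le> (SUP g\<in>G0. ennreal \<bar>\<Delta> g\<bar>)"
  proof (rule SUP_least)
    fix g assume "g \<in> G"
    then obtain s where s: "\<forall>n. s n \<in> G0" "\<forall>x. (\<lambda>n. s n x) \<longlonglongrightarrow> g x" using G0(2) by blast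
    have "(\<lambda>n. ennreal \<bar>\<Delta> (s n)\<bar>) \<longlonglongrightarrow> ennreal \<bar>\<Delta> g\<bar>"
      by (intro tendsto_ennrealI tendsto_rabs cont s(2))
    then show "ennreal \<bar>\<Delta> g\<bar> \<le> (SUP g\<in>G0. ennreal \<bar>\<Delta> g\<bar>)"
      by (rule LIMSEQ_le_const2) (use s(1) in \<open>auto intro!: exI[of _ 0] SUP_upper\<close>)
  qed
qed

lemma reindex_const:
  assumes N: "prob_space N" and f: "inj_on f J" "f \<in> J \<rightarrow> K"
  shows "distr (PiM K (\<lambda>_. N)) (PiM J (\<lambda>_. N)) (\<lambda>\<omega>. \<lambda>n\<in>J. \<omega> (f n)) = PiM J (\<lambda>_. N)"
  using distr_PiM_reindex[of K "\<lambda>_. N" f J] N f by simp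

definition mg :: "'i set \<Rightarrow> ('i \<Rightarrow> 'x) \<times> ('i \<Rightarrow> 'x) \<Rightarrow> ('i \<times> bool \<Rightarrow> 'x)" where
  "mg I z = (\<lambda>(c,b)\<in>I \<times> UNIV. if b then fst z c else snd z c)"

definition sp :: "'i set \<Rightarrow> ('i \<times> bool \<Rightarrow> 'x) \<Rightarrow> ('i \<Rightarrow> 'x) \<times> ('i \<Rightarrow> 'x)" where
  "sp I x = ((\<lambda>c\<in>I. x (c, True)), (\<lambda>c\<in>I. x (c, False)))"

lemma mg_measurable[measurable]:
  "mg I \<in> (PiM I (\<lambda>_. N) \<Otimes>\<^sub>M PiM I (\<lambda>_. N)) \<rightarrow>\<^sub>M PiM (I \<times> UNIV) (\<lambda>_. N)"
  unfolding mg_def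
  by (rule measurable_restrict) (auto split: prod.splits)

lemma sp_measurable[measurable]:
  "sp I \<in> PiM (I \<times> UNIV) (\<lambda>_. N) \<rightarrow>\<^sub>M (PiM I (\<lambda>_. N) \<Otimes>\<^sub>M PiM I (\<lambda>_. N))"
  unfolding sp_def by measurable

lemma sp_mg: "z \<in> space (PiM I (\<lambda>_. N) \<Otimes>\<^sub>M PiM I (\<lambda>_. N)) \<Longrightarrow> sp I (mg I z) = z"
  by (cases z) (auto simp: sp_def mg_def space_pair_measure space_PiM PiE_def extensional_def fun_eq_iff)

lemma distr_mg:
  fixes N :: "'x measure" and I :: "'i set"
  assumes N: "prob_space N" and I: "finite I"
  shows "distr (PiM I (\<lambda>_. N) \<Otimes>\<^sub>M PiM I (\<lambda>_. N)) (PiM (I \<times> UNIV) (\<lambda>_. N)) (mg I) = PiM (I \<times> UNIV) (\<lambda>_. N)"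
proof -
  interpret N: prob_space N by fact
  interpret PS: product_sigma_finite "\<lambda>_. N" by standard
  interpret P: prob_space "PiM I (\<lambda>_. N)" by (intro prob_space_PiM N)
  interpret PP: pair_sigma_finite "PiM I (\<lambda>_. N)" "PiM I (\<lambda>_. N)" ..
  show ?thesis
  proof (rule PS.PiM_eqI)
    show "finite (I \<times> (UNIV::bool set))" using I by (intro finite_cartesian_product) simp_all
    show "sets (distr (PiM I (\<lambda>_. N) \<Otimes>\<^sub>M PiM I (\<lambda>_. N)) (PiM (I \<times> UNIV) (\<lambda>_. N)) (mg I)) = sets (PiM (I \<times> UNIV) (\<lambda>_. N))"
      by simp
    fix A :: "'i \<times> bool \<Rightarrow> 'x set" assume A: "\<And>i. i \<in> I \<times> UNIV \<Longrightarrow> A i \<in> sets N"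
    have pre: "mg I -` Pi\<^sub>E (I \<times> UNIV) A \<inter> space (PiM I (\<lambda>_. N) \<Otimes>\<^sub>M PiM I (\<lambda>_. N))
        = Pi\<^sub>E I (\<lambda>c. A (c, True)) \<times> Pi\<^sub>E I (\<lambda>c. A (c, False))"
      using A
      apply (auto simp: mg_def space_pair_measure space_PiM PiE_iff extensional_def)
      subgoal for a b x by (drule bspec[of _ _ x]) (auto dest: spec[of _ True])
      subgoal for a b x by (drule bspec[of _ _ x]) (auto dest: spec[of _ False])
      subgoal for a b x using sets.sets_into_space[OF A[of "(x,True)"]] by auto
      subgoal for a b x using sets.sets_into_space[OF A[of "(x,False)"]] by auto
      done
    have "emeasure (distr (PiM I (\<lambda>_. N) \<Otimes>\<^sub>M PiM I (\<lambda>_. N)) (PiM (I \<times> UNIV) (\<lambda>_. N)) (mg I)) (Pi\<^sub>E (I \<times> UNIV) A)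
        = emeasure (PiM I (\<lambda>_. N) \<Otimes>\<^sub>M PiM I (\<lambda>_. N)) (Pi\<^sub>E I (\<lambda>c. A (c, True)) \<times> Pi\<^sub>E I (\<lambda>c. A (c, False)))"
      using A by (subst emeasure_distr) (auto simp: pre[symmetric] intro!: sets_PiM_I_finite I)
    also have "\<dots> = (\<Prod>c\<in>I. emeasure N (A (c, True))) * (\<Prod>c\<in>I. emeasure N (A (c, False)))"
      using A I by (simp add: P.emeasure_pair_measure_Times PS.emeasure_PiM sets_PiM_I_finite)
    also have "\<dots> = (\<Prod>i\<in>I \<times> UNIV. emeasure N (A i))"
    proof -
      have "(\<Prod>i\<in>I \<times> UNIV. emeasure N (A i)) = (\<Prod>c\<in>I. \<Prod>b\<in>UNIV. emeasure N (A (c, b)))"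
        by (rule prod.cartesian_product')
      also have "\<dots> = (\<Prod>c\<in>I. emeasure N (A (c, True)) * emeasure N (A (c, False)))"
        by (simp add: UNIV_bool mult.commute)
      finally show ?thesis by (simp add: prod.distrib)
    qed
    finally show "emeasure (distr (PiM I (\<lambda>_. N) \<Otimes>\<^sub>M PiM I (\<lambda>_. N)) (PiM (I \<times> UNIV) (\<lambda>_. N)) (mg I)) (Pi\<^sub>E (I \<times> UNIV) A)
        = (\<Prod>i\<in>I \<times> UNIV. emeasure N (A i))" .
  qed
qed

lemma nn_integral_PP_Q:
  assumes N: "prob_space N" and I: "finite I"
    and h[measurable]: "h \<in> borel_measurable (PiM I (\<lambda>_. N) \<Otimes>\<^sub>M PiM I (\<lambda>_. N))"
  shows "(\<integral>\<^sup>+z. h z \<partial>(PiM I (\<lambda>_. N) \<Otimes>\<^sub>M PiM I (\<lambda>_. N)))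
       = (\<integral>\<^sup>+x. h (sp I x) \<partial>PiM (I \<times> UNIV) (\<lambda>_. N))"
proof -
  have "(\<integral>\<^sup>+z. h z \<partial>(PiM I (\<lambda>_. N) \<Otimes>\<^sub>M PiM I (\<lambda>_. N)))
      = (\<integral>\<^sup>+z. h (sp I (mg I z)) \<partial>(PiM I (\<lambda>_. N) \<Otimes>\<^sub>M PiM I (\<lambda>_. N)))"
    by (intro nn_integral_cong) (simp add: sp_mg)
  also have "\<dots> = (\<integral>\<^sup>+x. h (sp I x) \<partial>distr (PiM I (\<lambda>_. N) \<Otimes>\<^sub>M PiM I (\<lambda>_. N)) (PiM (I \<times> UNIV) (\<lambda>_. N)) (mg I))"
    by (subst nn_integral_distr) auto
  finally show ?thesis unfolding distr_mg[OF N I] .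
qed

definition mix :: "'i set \<Rightarrow> 'i set \<Rightarrow> ('i \<Rightarrow> 'x) \<times> ('i \<Rightarrow> 'x) \<Rightarrow> ('i \<Rightarrow> 'x)" where
  "mix I B z = (\<lambda>c\<in>I. if c \<in> B then fst z c else snd z c)"

definition sw :: "'i set \<Rightarrow> 'i set \<Rightarrow> ('i \<Rightarrow> 'x) \<times> ('i \<Rightarrow> 'x) \<Rightarrow> ('i \<Rightarrow> 'x) \<times> ('i \<Rightarrow> 'x)" where
  "sw I S z = ((\<lambda>c\<in>I. if c \<in> S then snd z c else fst z c), (\<lambda>c\<in>I. if c \<in> S then fst z c else snd z c))"

lemma mix_measurable[measurable]:
  "mix I B \<in> (PiM I (\<lambda>_. N) \<Otimes>\<^sub>M PiM I (\<lambda>_. N)) \<rightarrow>\<^sub>M PiM I (\<lambda>_. N)"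
  unfolding mix_def by measurable

lemma sw_measurable[measurable]:
  "sw I S \<in> (PiM I (\<lambda>_. N) \<Otimes>\<^sub>M PiM I (\<lambda>_. N)) \<rightarrow>\<^sub>M (PiM I (\<lambda>_. N) \<Otimes>\<^sub>M PiM I (\<lambda>_. N))"
  unfolding sw_def by measurable

lemma ghost:
  fixes N :: "'x measure" and I :: "'i set"
  assumes N: "prob_space N" and I: "finite I" and h[measurable]: "h \<in> borel_measurable (PiM I (\<lambda>_. N))"
  shows "(\<integral>\<^sup>+z. h (mix I B z) \<partial>(PiM I (\<lambda>_. N) \<Otimes>\<^sub>M PiM I (\<lambda>_. N))) = (\<integral>\<^sup>+u. h u \<partial>PiM I (\<lambda>_. N))"
proof -
  define f where "f c = (c, c \<in> B)" for c
  have "(\<integral>\<^sup>+z. h (mix I B z) \<partial>(PiM I (\<lambda>_. N) \<Otimes>\<^sub>M PiM I (\<lambda>_. N)))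
      = (\<integral>\<^sup>+x. h (mix I B (sp I x)) \<partial>PiM (I \<times> UNIV) (\<lambda>_. N))"
    by (rule nn_integral_PP_Q[OF N I]) measurable
  also have "\<dots> = (\<integral>\<^sup>+x. h (\<lambda>n\<in>I. x (f n)) \<partial>PiM (I \<times> UNIV) (\<lambda>_. N))"
    by (intro nn_integral_cong arg_cong[where f=h]) (auto simp: mix_def sp_def f_def fun_eq_iff)
  also have "\<dots> = (\<integral>\<^sup>+u. h u \<partial>distr (PiM (I \<times> UNIV) (\<lambda>_. N)) (PiM I (\<lambda>_. N)) (\<lambda>x. \<lambda>n\<in>I. x (f n)))"
    by (subst nn_integral_distr) (auto simp: f_def intro!: measurable_restrict measurable_component_singleton)
  also have "distr (PiM (I \<times> UNIV) (\<lambda>_. N)) (PiM I (\<lambda>_. N)) (\<lambda>x. \<lambda>n\<in>I. x (f n)) = PiM I (\<lambda>_. N)"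
    by (rule reindex_const[OF N]) (auto simp: f_def inj_on_def)
  finally show ?thesis .
qed

lemma swap_inv:
  fixes N :: "'x measure" and I :: "'i set"
  assumes N: "prob_space N" and I: "finite I"
    and h[measurable]: "h \<in> borel_measurable (PiM I (\<lambda>_. N) \<Otimes>\<^sub>M PiM I (\<lambda>_. N))"
  shows "(\<integral>\<^sup>+z. h (sw I S z) \<partial>(PiM I (\<lambda>_. N) \<Otimes>\<^sub>M PiM I (\<lambda>_. N)))
       = (\<integral>\<^sup>+z. h z \<partial>(PiM I (\<lambda>_. N) \<Otimes>\<^sub>M PiM I (\<lambda>_. N)))"
proof -
  define g where "g y = (fst y, if fst y \<in> S then \<not> snd y else snd y)" for y :: "'i \<times> bool"
  have g: "inj_on g (I \<times> UNIV)" "g \<in> I \<times> UNIV \<rightarrow> I \<times> UNIV"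
    by (auto simp: g_def inj_on_def split: if_splits)
  have "(\<integral>\<^sup>+z. h (sw I S z) \<partial>(PiM I (\<lambda>_. N) \<Otimes>\<^sub>M PiM I (\<lambda>_. N)))
      = (\<integral>\<^sup>+x. h (sw I S (sp I x)) \<partial>PiM (I \<times> UNIV) (\<lambda>_. N))"
    by (rule nn_integral_PP_Q[OF N I]) measurable
  also have "\<dots> = (\<integral>\<^sup>+x. h (sp I (\<lambda>n\<in>I \<times> UNIV. x (g n))) \<partial>PiM (I \<times> UNIV) (\<lambda>_. N))"
    by (intro nn_integral_cong arg_cong[where f=h]) (auto simp: sw_def sp_def g_def fun_eq_iff)
  also have "\<dots> = (\<integral>\<^sup>+x. h (sp I x) \<partial>distr (PiM (I \<times> UNIV) (\<lambda>_. N)) (PiM (I \<times> UNIV) (\<lambda>_. N)) (\<lambda>x. \<lambda>n\<in>I \<times> UNIV. x (g n)))"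
    using g(2) by (subst nn_integral_distr) (auto intro!: measurable_restrict measurable_component_singleton)
  also have "distr (PiM (I \<times> UNIV) (\<lambda>_. N)) (PiM (I \<times> UNIV) (\<lambda>_. N)) (\<lambda>x. \<lambda>n\<in>I \<times> UNIV. x (g n)) = PiM (I \<times> UNIV) (\<lambda>_. N)"
    by (rule reindex_const[OF N g])
  also have "(\<integral>\<^sup>+x. h (sp I x) \<partial>PiM (I \<times> UNIV) (\<lambda>_. N)) = (\<integral>\<^sup>+z. h z \<partial>(PiM I (\<lambda>_. N) \<Otimes>\<^sub>M PiM I (\<lambda>_. N)))"
    by (rule nn_integral_PP_Q[OF N I, symmetric]) measurable
  finally show ?thesis .
qed

lemma telescope:
  fixes f :: "nat \<Rightarrow> 'x \<Rightarrow> real"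
  assumes Q: "prob_space Q" and f[measurable]: "\<And>m. f m \<in> borel_measurable Q"
    and f0: "integrable Q (f 0)" and fK: "\<And>x. x \<in> space Q \<Longrightarrow> f K x = b"
  shows "ennreal \<bar>b - (\<integral>x. f 0 x \<partial>Q)\<bar> \<le> (\<Sum>m<K. \<integral>\<^sup>+x. ennreal \<bar>f (Suc m) x - f m x\<bar> \<partial>Q)"
proof (cases "\<exists>m<K. (\<integral>\<^sup>+x. ennreal \<bar>f (Suc m) x - f m x\<bar> \<partial>Q) = \<top>")
  case True
  then obtain m where "m < K" "(\<integral>\<^sup>+x. ennreal \<bar>f (Suc m) x - f m x\<bar> \<partial>Q) = \<top>" by blast
  then have "(\<Sum>m<K. \<integral>\<^sup>+x. ennreal \<bar>f (Suc m) x - f m x\<bar> \<partial>Q) = \<top>"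
    by (subst ennreal_sum_eq_top) auto
  then show ?thesis by (metis top_greatest)
next
  case False
  interpret prob_space Q by fact
  have d: "integrable Q (\<lambda>x. f (Suc m) x - f m x)" if "m < K" for m
    using False that by (intro integrableI_bounded) (auto simp: less_top)
  have fi: "m \<le> K \<Longrightarrow> integrable Q (f m)" for m
  proof (induction m)
    case (Suc m)
    then have mK: "m < K" "m \<le> K" by auto
    have "integrable Q (\<lambda>x. (f (Suc m) x - f m x) + f m x)"
      by (rule Bochner_Integration.integrable_add[OF d[OF mK(1)] Suc.IH[OF mK(2)]])
    then show ?case by simp
  qed (simp add: f0)
  have "(\<integral>x. f K x \<partial>Q) = (\<integral>x. b \<partial>Q)"
    using fK by (intro Bochner_Integration.integral_cong) auto
  then have "b = (\<integral>x. f K x \<partial>Q)" by (simp add: prob_space)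
  then have "b - (\<integral>x. f 0 x \<partial>Q) = (\<integral>x. f K x - f 0 x \<partial>Q)"
    using fi[of K] fi[of 0] by simp
  also have "\<dots> = (\<integral>x. (\<Sum>m<K. f (Suc m) x - f m x) \<partial>Q)"
    by (simp only: sum_lessThan_telescope[of "\<lambda>m. f m _"])
  also have "\<dots> = (\<Sum>m<K. \<integral>x. f (Suc m) x - f m x \<partial>Q)"
    using d by (intro Bochner_Integration.integral_sum) auto
  finally have eq: "b - (\<integral>x. f 0 x \<partial>Q) = (\<Sum>m<K. \<integral>x. f (Suc m) x - f m x \<partial>Q)" .
  have "ennreal \<bar>b - (\<integral>x. f 0 x \<partial>Q)\<bar> \<le> ennreal (\<Sum>m<K. \<bar>\<integral>x. f (Suc m) x - f m x \<partial>Q\<bar>)"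
    unfolding eq by (intro ennreal_leI sum_abs)
  also have "\<dots> = (\<Sum>m<K. ennreal \<bar>\<integral>x. f (Suc m) x - f m x \<partial>Q\<bar>)"
    by simp
  also have "\<dots> \<le> (\<Sum>m<K. \<integral>\<^sup>+x. ennreal \<bar>f (Suc m) x - f m x\<bar> \<partial>Q)"
    using integral_norm_bound_ennreal[OF d] by (intro sum_mono) auto
  finally show ?thesis .
qed

locale L =
  fixes M :: "'a measure"
    and Z :: "('k::finite \<Rightarrow> nat) \<Rightarrow> 'a \<Rightarrow> 'b::polish_space"
    and U :: "('k \<Rightarrow> nat) \<Rightarrow> 'a \<Rightarrow> real"
    and \<tau> :: "(('k \<Rightarrow> nat) \<Rightarrow> real) \<Rightarrow> 'b"
    and \<epsilon> :: "('k \<Rightarrow> nat) \<Rightarrow> 'a \<Rightarrow> real"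
    and G :: "('b \<Rightarrow> real) set"
    and \<Phi> :: "real \<Rightarrow> real"
    and C :: "'k \<Rightarrow> nat"
  assumes M: "prob_space M"
    and Z_meas: "\<And>j. (\<forall>i. 1 \<le> j i) \<Longrightarrow> Z j \<in> measurable M borel"
    and U_meas: "\<And>c. c \<noteq> (\<lambda>_. 0) \<Longrightarrow> U c \<in> borel_measurable M"
    and U_unif: "\<And>c. c \<noteq> (\<lambda>_. 0) \<Longrightarrow> distr M borel (U c) = uniform_measure lborel {0..1}"
    and U_indep: "prob_space.indep_vars M (\<lambda>_. borel) U {c. c \<noteq> (\<lambda>_. 0)}"
    and \<tau>_meas: "\<tau> \<in> measurable
        (Pi\<^sub>M {e. (\<forall>i. e i \<le> 1) \<and> e \<noteq> (\<lambda>_. 0)} (\<lambda>_. borel)) borel"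
    and Z_repr: "AE \<omega> in M. \<forall>j. (\<forall>i. 1 \<le> j i) \<longrightarrow>
        Z j \<omega> = \<tau> (restrict (\<lambda>e. U (odot j e) \<omega>) {e. (\<forall>i. e i \<le> 1) \<and> e \<noteq> (\<lambda>_. 0)})"
    and G_pm: "pointwise_measurable G"
    and G_meas: "\<And>g. g \<in> G \<Longrightarrow> g \<in> borel_measurable borel"
    and G_int: "\<And>g. g \<in> G \<Longrightarrow> integrable M (\<lambda>\<omega>. g (Z (\<lambda>_. 1) \<omega>))"
    and \<Phi>_mono: "mono_on {0..} \<Phi>"
    and \<Phi>_convex: "convex_on {0..} \<Phi>"
    and \<epsilon>_meas: "\<And>c. \<epsilon> c \<in> borel_measurable M"
    and \<epsilon>_rad: "\<And>c. measure M {\<omega> \<in> space M. \<epsilon> c \<omega> = 1} = 1/2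
                 \<and> measure M {\<omega> \<in> space M. \<epsilon> c \<omega> = -1} = 1/2"
    and \<epsilon>_indep: "prob_space.indep_vars M (\<lambda>_. borel) \<epsilon> UNIV"
    and \<epsilon>_Z_indep: "\<And>A B. A \<in> sets (Pi\<^sub>M UNIV (\<lambda>_. (borel :: real measure))) \<Longrightarrow>
        B \<in> sets (Pi\<^sub>M {j. \<forall>i. 1 \<le> j i} (\<lambda>_. (borel :: 'b measure))) \<Longrightarrow>
        measure M {\<omega> \<in> space M. (\<lambda>c. \<epsilon> c \<omega>) \<in> A \<and>
                      restrict (\<lambda>j. Z j \<omega>) {j. \<forall>i. 1 \<le> j i} \<in> B}
        = measure M {\<omega> \<in> space M. (\<lambda>c. \<epsilon> c \<omega>) \<in> A}
          * measure M {\<omega> \<in> space M. restrict (\<lambda>j. Z j \<omega>) {j. \<forall>i. 1 \<le> j i} \<in> B}"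
    and C_pos: "\<forall>i. 1 \<le> C i"
begin

definition "E0 = {e::'k\<Rightarrow>nat. (\<forall>i. e i \<le> 1) \<and> e \<noteq> (\<lambda>_. 0)}"
definition "Bx = {j::'k\<Rightarrow>nat. \<forall>i. 1 \<le> j i \<and> j i \<le> C i}"
definition "II = {c::'k\<Rightarrow>nat. (\<forall>i. c i \<le> C i) \<and> c \<noteq> (\<lambda>_. 0)}"
definition "J1 = {j::'k\<Rightarrow>nat. \<forall>i. 1 \<le> j i}"
definition "Nu = uniform_measure lborel {0..1::real}"
definition "P = PiM II (\<lambda>_. Nu)"
definition "PP = P \<Otimes>\<^sub>M P"
definition "Tz j u = \<tau> (restrict (\<lambda>e. u (odot j e)) E0)"
definition "Ug \<omega> = restrict (\<lambda>c. U c \<omega>) II"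
definition "NC = real (prod C UNIV)"
definition "Av g u = (1 / NC) * (\<Sum>j\<in>Bx. g (Tz j u))"
definition "Eg g = (\<integral>\<omega>. g (Z (\<lambda>_. 1) \<omega>) \<partial>M)"
definition "es = (SOME l. set l = E0 \<and> distinct l)"
definition "K = length es"
definition "pat c = (\<lambda>i. if c i = 0 then 0 else (1::nat))"
definition "Bm m = {c. pat c \<in> set (take m es)}"
definition "W m z = mix II (Bm m) z"
definition "D m z = (SUP g\<in>G. ennreal \<bar>Av g (W (Suc m) z) - Av g (W m z)\<bar>)"
definition "X e s u = (SUP g\<in>G. ennreal \<bar>(1 / NC) * (\<Sum>j\<in>Bx. s (odot j e) * g (Tz j u))\<bar>)"
definition "Le = distr M (PiM UNIV (\<lambda>_. borel :: real measure)) (\<lambda>\<omega> c. \<epsilon> c \<omega>)"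
definition "LZ = distr M (PiM J1 (\<lambda>_. borel :: 'b measure)) (\<lambda>\<omega>. restrict (\<lambda>j. Z j \<omega>) J1)"

lemma finite_E0: "finite E0"
proof -
  have "E0 \<subseteq> PiE UNIV (\<lambda>_. {0..1})" by (auto simp: E0_def PiE_def)
  then show ?thesis by (rule finite_subset) (simp add: finite_PiE)
qed

lemma finite_II: "finite II"
proof -
  have "II \<subseteq> PiE UNIV (\<lambda>i. {0..C i})" by (auto simp: II_def PiE_def)
  then show ?thesis by (rule finite_subset) (simp add: finite_PiE)
qed

lemma Bx_eq: "Bx = PiE UNIV (\<lambda>i. {1..C i})"
  by (auto simp: Bx_def PiE_def)

lemma finite_Bx: "finite Bx"
  by (simp add: Bx_eq finite_PiE)

lemma card_Bx: "real (card Bx) = NC"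
  by (simp add: Bx_eq card_PiE NC_def)

lemma NC_pos: "NC > 0"
proof -
  have "\<forall>i. 0 < C i" using C_pos by (simp add: Suc_le_eq)
  then show ?thesis by (simp add: NC_def prod_pos)
qed

lemma one_Bx: "(\<lambda>_. 1) \<in> Bx"
  using C_pos by (simp add: Bx_def)

lemma Bx_ne: "Bx \<noteq> {}" using one_Bx by auto

lemma Bx_J1: "Bx \<subseteq> J1" by (auto simp: Bx_def J1_def)

lemma card_E0: "card E0 = 2 ^ CARD('k) - 1"
proof -
  have e: "E0 = PiE UNIV (\<lambda>_. {0..1::nat}) - {\<lambda>_. 0}" by (auto simp: E0_def PiE_def)
  have "card (PiE UNIV (\<lambda>_. {0..1::nat}) :: ('k \<Rightarrow> nat) set) = 2 ^ CARD('k)"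
    by (simp add: card_PiE numeral_2_eq_2)
  moreover have "(\<lambda>_. 0) \<in> (PiE UNIV (\<lambda>_. {0..1::nat}) :: ('k \<Rightarrow> nat) set)" by auto
  ultimately show ?thesis unfolding e by (subst card_Diff_singleton) (auto simp: finite_PiE)
qed

lemma es: "set es = E0" "distinct es"
proof -
  have "\<exists>l. set l = E0 \<and> distinct l" using finite_E0 finite_distinct_list by blast
  then have "set es = E0 \<and> distinct es" unfolding es_def by (rule someI_ex)
  then show "set es = E0" "distinct es" by auto
qed

lemma K_card: "K = card E0"
  using es distinct_card by (fastforce simp: K_def)

lemma K_pos: "K > 0"
proof -
  have "(\<lambda>_. 1) \<in> E0" by (simp add: E0_def fun_eq_iff)
  then show ?thesis using finite_E0 by (auto simp: K_card card_gt_0_iff)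
qed

lemma K_real: "real K = 2 ^ CARD('k) - 1"
proof -
  have "(1::nat) \<le> 2 ^ CARD('k)" by simp
  then show ?thesis by (simp add: K_card card_E0 of_nat_diff)
qed

lemma odot_II: assumes j: "j \<in> Bx" and e: "e \<in> E0" shows "odot j e \<in> II"
proof -
  have a: "j i * e i \<le> C i" for i
  proof -
    have "e i \<le> 1" using e by (simp add: E0_def)
    then have "j i * e i \<le> j i * 1" by (intro mult_le_mono2)
    also have "\<dots> \<le> C i" using j by (simp add: Bx_def)
    finally show ?thesis .
  qed
  obtain i where "e i \<noteq> 0" using e by (auto simp: E0_def fun_eq_iff)
  moreover have "j i \<noteq> 0" using j by (auto simp: Bx_def) (metis Suc_le_eq)
  ultimately have "odot j e i \<noteq> 0" by (simp add: odot_def)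
  then have "odot j e \<noteq> (\<lambda>_. 0)" by auto
  with a show ?thesis by (simp add: II_def odot_def)
qed

lemma odot_inj: assumes j: "j \<in> J1" shows "inj_on (odot j) E0"
proof (rule inj_onI)
  fix x y assume "odot j x = odot j y"
  then have "j i * x i = j i * y i" for i by (auto simp: odot_def fun_eq_iff)
  moreover have "j i \<noteq> 0" for i using j by (auto simp: J1_def) (metis Suc_le_eq)
  ultimately show "x = y" by (auto simp: fun_eq_iff)
qed

lemma pat_odot: assumes j: "j \<in> J1" and e: "e \<in> E0" shows "pat (odot j e) = e"
proof
  fix i
  have "j i \<noteq> 0" using j by (auto simp: J1_def) (metis Suc_le_eq)
  moreover have "e i = 0 \<or> e i = 1" using e by (auto simp: E0_def) (metis le_Suc_eq le_zero_eq One_nat_def)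
  ultimately show "pat (odot j e) i = e i" by (auto simp: pat_def odot_def)
qed

lemma pat_II: "c \<in> II \<Longrightarrow> pat c \<in> E0"
  by (auto simp: pat_def II_def E0_def fun_eq_iff)

lemma Tz_cong: "(\<And>e. e \<in> E0 \<Longrightarrow> v (odot j e) = v' (odot j e)) \<Longrightarrow> Tz j v = Tz j v'"
  unfolding Tz_def by (intro arg_cong[where f=\<tau>]) (auto simp: restrict_def)

end

context L begin

lemma Nu_prob: "prob_space Nu"
  unfolding Nu_def by (rule prob_space_uniform_measure) auto

lemma sets_Nu[measurable_cong]: "sets Nu = sets borel"
  by (simp add: Nu_def)

lemma space_Nu: "space Nu = UNIV"
  by (simp add: Nu_def)

lemma P_prob: "prob_space P"
  unfolding P_def by (intro prob_space_PiM Nu_prob)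

lemma PP_prob: "prob_space PP"
proof -
  interpret P: prob_space P by (rule P_prob)
  interpret PP: pair_prob_space P P ..
  show ?thesis unfolding PP_def by (rule PP.prob_space_axioms)
qed

lemma sets_P: "sets P = sets (PiM II (\<lambda>_. borel))"
  unfolding P_def by (rule sets_PiM_cong) (auto simp: sets_Nu)

lemma space_P: "space P = PiE II (\<lambda>_. UNIV)"
  by (simp add: P_def space_PiM space_Nu)

lemma meas_Nu: "f \<in> Xm \<rightarrow>\<^sub>M Nu \<longleftrightarrow> f \<in> Xm \<rightarrow>\<^sub>M borel"
  using measurable_cong_sets[OF refl sets_Nu, of Xm] by simp

lemma meas_PiNu: "f \<in> PiM A (\<lambda>_. Nu) \<rightarrow>\<^sub>M Y \<longleftrightarrow> f \<in> PiM A (\<lambda>_. borel) \<rightarrow>\<^sub>M Y"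
proof -
  have "sets (PiM A (\<lambda>_. Nu)) = sets (PiM A (\<lambda>_. borel))" by (rule sets_PiM_cong) (simp_all add: sets_Nu)
  then show ?thesis using measurable_cong_sets[of "PiM A (\<lambda>_. Nu)" "PiM A (\<lambda>_. borel)" Y Y] by simp
qed

lemma meas_PiNu2: "f \<in> Xm \<rightarrow>\<^sub>M PiM A (\<lambda>_. Nu) \<longleftrightarrow> f \<in> Xm \<rightarrow>\<^sub>M PiM A (\<lambda>_. borel)"
proof -
  have "sets (PiM A (\<lambda>_. Nu)) = sets (PiM A (\<lambda>_. borel))" by (rule sets_PiM_cong) (simp_all add: sets_Nu)
  then show ?thesis using measurable_cong_sets[of Xm Xm "PiM A (\<lambda>_. Nu)" "PiM A (\<lambda>_. borel)"] by simp
qed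

lemma comp_meas[measurable]: "c \<in> II \<Longrightarrow> (\<lambda>u. u c) \<in> P \<rightarrow>\<^sub>M borel"
  unfolding P_def meas_Nu[symmetric] by (rule measurable_component_singleton)

lemma tau_meas': "\<tau> \<in> PiM E0 (\<lambda>_. Nu) \<rightarrow>\<^sub>M borel"
  using \<tau>_meas unfolding E0_def[symmetric] meas_PiNu .

lemma restr_meas: "j \<in> Bx \<Longrightarrow> (\<lambda>u. restrict (\<lambda>e. u (odot j e)) E0) \<in> P \<rightarrow>\<^sub>M PiM E0 (\<lambda>_. Nu)"
  unfolding meas_PiNu2 by (rule measurable_restrict) (rule comp_meas, rule odot_II)

lemma Tz_meas: "j \<in> Bx \<Longrightarrow> Tz j \<in> P \<rightarrow>\<^sub>M borel"
  unfolding Tz_def using measurable_comp[OF restr_meas tau_meas'] by (simp add: comp_def)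

lemma gTz_meas[measurable]: "g \<in> G \<Longrightarrow> j \<in> Bx \<Longrightarrow> (\<lambda>u. g (Tz j u)) \<in> borel_measurable P"
  using measurable_comp[OF Tz_meas G_meas] by (simp add: comp_def)

lemma Av_meas[measurable]: "g \<in> G \<Longrightarrow> Av g \<in> borel_measurable P"
  unfolding Av_def using gTz_meas finite_Bx by (intro borel_measurable_times borel_measurable_const borel_measurable_sum) auto

lemma Ug_meas[measurable]: "Ug \<in> M \<rightarrow>\<^sub>M P"
  unfolding Ug_def P_def meas_PiNu2
  by (rule measurable_restrict) (rule U_meas, auto simp: II_def)

lemma distr_Ug: "distr M P Ug = P"
proof -
  interpret prob_space M by (rule M)
  define V where "V i = (if i = (\<lambda>_. 0) then (\<lambda>_. 0) else U i)" for i
  have ind0: "indep_vars (\<lambda>_. borel) U II"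
    by (rule indep_vars_subset[OF U_indep]) (auto simp: II_def)
  have ind: "indep_vars (\<lambda>_. borel) V II"
    using ind0 by (subst indep_vars_cong[of II II V U]) (auto simp: V_def II_def)
  have Vm: "random_variable borel (V i)" for i by (auto simp: V_def intro: U_meas)
  have ne: "II \<noteq> {}"
  proof -
    have "(\<lambda>_. 1) \<in> II" using C_pos by (auto simp: II_def fun_eq_iff)
    then show ?thesis by auto
  qed
  have "distr M (PiM II (\<lambda>_. borel)) (\<lambda>x. \<lambda>i\<in>II. V i x) = PiM II (\<lambda>i. distr M borel (V i))"
    using ind indep_vars_iff_distr_eq_PiM[OF ne Vm] by simp
  also have "\<dots> = P"
    unfolding P_def Nu_def by (rule PiM_cong) (auto simp: II_def U_unif V_def)
  finally have "distr M (PiM II (\<lambda>_. borel)) (\<lambda>x. \<lambda>i\<in>II. V i x) = P" .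
  moreover have "distr M P Ug = distr M (PiM II (\<lambda>_. borel)) (\<lambda>x. \<lambda>i\<in>II. V i x)"
    by (rule distr_cong) (auto simp: sets_P Ug_def V_def II_def restrict_def fun_eq_iff)
  ultimately show ?thesis by simp
qed

lemma Z_AE: "AE \<omega> in M. \<forall>j\<in>Bx. Z j \<omega> = Tz j (Ug \<omega>)"
  using Z_repr
proof (rule eventually_mono)
  fix \<omega> assume *: "\<forall>j. (\<forall>i. 1 \<le> j i) \<longrightarrow>
        Z j \<omega> = \<tau> (restrict (\<lambda>e. U (odot j e) \<omega>) {e. (\<forall>i. e i \<le> 1) \<and> e \<noteq> (\<lambda>_. 0)})"
  show "\<forall>j\<in>Bx. Z j \<omega> = Tz j (Ug \<omega>)"
  proof
    fix j assume j: "j \<in> Bx"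
    then have "Z j \<omega> = \<tau> (restrict (\<lambda>e. U (odot j e) \<omega>) E0)"
      using * by (auto simp: Bx_def E0_def)
    also have "\<dots> = Tz j (Ug \<omega>)"
      unfolding Tz_def Ug_def using odot_II[OF j] by (intro arg_cong[where f=\<tau>]) (auto simp: restrict_def fun_eq_iff)
    finally show "Z j \<omega> = Tz j (Ug \<omega>)" .
  qed
qed

lemma distr_restr: "j \<in> Bx \<Longrightarrow> distr P (PiM E0 (\<lambda>_. Nu)) (\<lambda>u. restrict (\<lambda>e. u (odot j e)) E0) = PiM E0 (\<lambda>_. Nu)"
  unfolding P_def using odot_inj[of j] Bx_J1 odot_II[of j]
  by (intro reindex_const Nu_prob) (auto simp: restrict_def)

lemma int_Tz:
  fixes h :: "'b \<Rightarrow> real"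
  assumes j: "j \<in> Bx" and h[measurable]: "h \<in> borel_measurable borel"
  shows "integrable P (\<lambda>u. h (Tz j u)) \<longleftrightarrow> integrable (PiM E0 (\<lambda>_. Nu)) (\<lambda>v. h (\<tau> v))"
    and "(\<integral>u. h (Tz j u) \<partial>P) = (\<integral>v. h (\<tau> v) \<partial>PiM E0 (\<lambda>_. Nu))"
proof -
  have hm: "(\<lambda>v. h (\<tau> v)) \<in> borel_measurable (PiM E0 (\<lambda>_. Nu))"
    using measurable_comp[OF tau_meas' h] by (simp add: comp_def)
  show "integrable P (\<lambda>u. h (Tz j u)) \<longleftrightarrow> integrable (PiM E0 (\<lambda>_. Nu)) (\<lambda>v. h (\<tau> v))"
    using integrable_distr_eq[OF restr_meas[OF j] hm] distr_restr[OF j] by (simp add: Tz_def)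
  show "(\<integral>u. h (Tz j u) \<partial>P) = (\<integral>v. h (\<tau> v) \<partial>PiM E0 (\<lambda>_. Nu))"
    using integral_distr[OF restr_meas[OF j] hm] distr_restr[OF j] by (simp add: Tz_def)
qed

lemma gZ1: 
  assumes g: "g \<in> G"
  shows "integrable (PiM E0 (\<lambda>_. Nu)) (\<lambda>v. g (\<tau> v))"
    and "Eg g = (\<integral>v. g (\<tau> v) \<partial>PiM E0 (\<lambda>_. Nu))"
proof -
  have [measurable]: "g \<in> borel_measurable borel" by (rule G_meas[OF g])
  have Z1[measurable]: "Z (\<lambda>_. 1) \<in> borel_measurable M" by (rule Z_meas) simp
  have ae: "AE \<omega> in M. g (Z (\<lambda>_. 1) \<omega>) = g (Tz (\<lambda>_. 1) (Ug \<omega>))"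
    using Z_AE by (rule eventually_mono) (use one_Bx in auto)
  have m1: "(\<lambda>\<omega>. g (Z (\<lambda>_. 1) \<omega>)) \<in> borel_measurable M" by measurable
  have m2: "(\<lambda>\<omega>. g (Tz (\<lambda>_. 1) (Ug \<omega>))) \<in> borel_measurable M"
    using measurable_comp[OF Ug_meas gTz_meas[OF g one_Bx]] by (simp add: comp_def)
  have "integrable M (\<lambda>\<omega>. g (Tz (\<lambda>_. 1) (Ug \<omega>)))"
    using G_int[OF g] integrable_cong_AE[OF m1 m2 ae] by simp
  then have "integrable P (\<lambda>u. g (Tz (\<lambda>_. 1) u))"
    using integrable_distr_eq[OF Ug_meas gTz_meas[OF g one_Bx]] distr_Ug by simp
  then show "integrable (PiM E0 (\<lambda>_. Nu)) (\<lambda>v. g (\<tau> v))"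
    using int_Tz(1)[OF one_Bx] by simp
  have "Eg g = (\<integral>\<omega>. g (Tz (\<lambda>_. 1) (Ug \<omega>)) \<partial>M)"
    unfolding Eg_def by (rule integral_cong_AE[OF m1 m2 ae])
  also have "\<dots> = (\<integral>u. g (Tz (\<lambda>_. 1) u) \<partial>P)"
    using integral_distr[OF Ug_meas gTz_meas[OF g one_Bx]] distr_Ug by simp
  also have "\<dots> = (\<integral>v. g (\<tau> v) \<partial>PiM E0 (\<lambda>_. Nu))"
    by (rule int_Tz(2)[OF one_Bx]) simp
  finally show "Eg g = (\<integral>v. g (\<tau> v) \<partial>PiM E0 (\<lambda>_. Nu))" .
qed

lemma Av_int:
  assumes g: "g \<in> G"
  shows "integrable P (Av g)" and "(\<integral>u. Av g u \<partial>P) = Eg g"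
proof -
  have [measurable]: "g \<in> borel_measurable borel" by (rule G_meas[OF g])
  have i: "integrable P (\<lambda>u. g (Tz j u))" if "j \<in> Bx" for j
    using int_Tz(1)[OF that] gZ1(1)[OF g] by simp
  show "integrable P (Av g)"
    unfolding Av_def using i by (intro integrable_mult_right integrable_sum) auto
  have "(\<integral>u. Av g u \<partial>P) = (1 / NC) * (\<Sum>j\<in>Bx. \<integral>u. g (Tz j u) \<partial>P)"
    unfolding Av_def using i by (simp add: Bochner_Integration.integral_sum)
  also have "\<dots> = (1 / NC) * (\<Sum>j\<in>Bx. Eg g)"
    using int_Tz(2) gZ1(2)[OF g] by simp
  also have "\<dots> = Eg g"
    using card_Bx NC_pos by simp
  finally show "(\<integral>u. Av g u \<partial>P) = Eg g" .
qed

end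

context L begin

definition "G0 = (SOME G0. G0 \<subseteq> G \<and> countable G0 \<and> (\<forall>g\<in>G. \<exists>s. (\<forall>n. s n \<in> G0) \<and> (\<forall>x. (\<lambda>n. s n x) \<longlonglongrightarrow> g x)))"

lemma G0: "G0 \<subseteq> G" "countable G0" "\<forall>g\<in>G. \<exists>s. (\<forall>n. s n \<in> G0) \<and> (\<forall>x. (\<lambda>n. s n x) \<longlonglongrightarrow> g x)"
proof -
  have "\<exists>G0. G0 \<subseteq> G \<and> countable G0 \<and> (\<forall>g\<in>G. \<exists>s. (\<forall>n. s n \<in> G0) \<and> (\<forall>x. (\<lambda>n. s n x) \<longlonglongrightarrow> g x))"
    using G_pm unfolding pointwise_measurable_def by blast
  then have "G0 \<subseteq> G \<and> countable G0 \<and> (\<forall>g\<in>G. \<exists>s. (\<forall>n. s n \<in> G0) \<and> (\<forall>x. (\<lambda>n. s n x) \<longlonglongrightarrow> g x))"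
    unfolding G0_def by (rule someI_ex)
  then show "G0 \<subseteq> G" "countable G0" "\<forall>g\<in>G. \<exists>s. (\<forall>n. s n \<in> G0) \<and> (\<forall>x. (\<lambda>n. s n x) \<longlonglongrightarrow> g x)"
    by auto
qed

lemma supG0:
  assumes "\<And>h s. (\<forall>x. (\<lambda>n. s n x) \<longlonglongrightarrow> h x) \<Longrightarrow> (\<lambda>n. \<Delta> (s n)) \<longlonglongrightarrow> \<Delta> h"
  shows "(SUP g\<in>G. ennreal \<bar>\<Delta> g\<bar>) = (SUP g\<in>G0. ennreal \<bar>\<Delta> g\<bar>)"
  by (rule sup_G0[OF G0(1) G0(3) assms])

lemma Av_cont: "(\<forall>x. (\<lambda>n. s n x) \<longlonglongrightarrow> h x) \<Longrightarrow> (\<lambda>n. Av (s n) v) \<longlonglongrightarrow> Av h v"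
  unfolding Av_def by (intro tendsto_intros) auto

definition "Xz e s z = (SUP g\<in>G. ennreal \<bar>(1 / NC) * (\<Sum>j\<in>Bx. s (odot j e) * g (z j))\<bar>)"

lemma X_Xz: "X e s u = Xz e s (\<lambda>j. Tz j u)"
  by (simp add: X_def Xz_def)

lemma Xz_G0: "Xz e s z = (SUP g\<in>G0. ennreal \<bar>(1 / NC) * (\<Sum>j\<in>Bx. s (odot j e) * g (z j))\<bar>)"
  unfolding Xz_def by (rule supG0) (intro tendsto_intros, auto)

lemma D_G0: "D m z = (SUP g\<in>G0. ennreal \<bar>Av g (W (Suc m) z) - Av g (W m z)\<bar>)"
  unfolding D_def by (rule supG0) (intro tendsto_intros Av_cont, auto)

lemma W_meas[measurable]: "W m \<in> PP \<rightarrow>\<^sub>M P"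
  unfolding W_def PP_def P_def by (rule mix_measurable)

lemma D_meas[measurable]: "D m \<in> borel_measurable PP"
proof -
  have "(\<lambda>z. SUP g\<in>G0. ennreal \<bar>Av g (W (Suc m) z) - Av g (W m z)\<bar>) \<in> borel_measurable PP"
    using G0(1) by (intro borel_measurable_SUP G0(2)) auto
  then show ?thesis unfolding D_G0[abs_def] .
qed

lemma Xz_meas[measurable]:
  "(\<lambda>(s, z). Xz e s z) \<in> borel_measurable (PiM UNIV (\<lambda>_. borel) \<Otimes>\<^sub>M PiM J1 (\<lambda>_. borel))"
proof -
  have [measurable]: "j \<in> Bx \<Longrightarrow> (\<lambda>z. z j) \<in> PiM J1 (\<lambda>_. borel :: 'b measure) \<rightarrow>\<^sub>M borel" for j
    using Bx_J1 by (intro measurable_component_singleton) auto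
  have [measurable]: "g \<in> G0 \<Longrightarrow> g \<in> borel_measurable borel" for g using G0(1) G_meas by auto
  have "(\<lambda>(s, z). SUP g\<in>G0. ennreal \<bar>(1 / NC) * (\<Sum>j\<in>Bx. s (odot j e) * g (z j))\<bar>)
     \<in> borel_measurable (PiM UNIV (\<lambda>_. borel) \<Otimes>\<^sub>M PiM J1 (\<lambda>_. borel))"
    unfolding case_prod_beta using G0(2) by measurable
  then show ?thesis unfolding Xz_G0 .
qed

lemma X_meas[measurable]: "X e s \<in> borel_measurable P"
proof -
  have "(\<lambda>u. SUP g\<in>G0. ennreal \<bar>(1 / NC) * (\<Sum>j\<in>Bx. s (odot j e) * g (Tz j u))\<bar>) \<in> borel_measurable P"
    using G0(1) by (intro borel_measurable_SUP G0(2)) auto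
  then show ?thesis unfolding X_Xz Xz_G0 .
qed

lemma take_K: "take K es = es" by (simp add: K_def)

lemma W0: "u' \<in> space P \<Longrightarrow> W 0 (u, u') = u'"
  by (auto simp: W_def mix_def Bm_def space_P PiE_def extensional_def fun_eq_iff)

lemma WK: "u \<in> space P \<Longrightarrow> W K (u, u') = u"
  using pat_II by (auto simp: W_def mix_def Bm_def take_K es space_P PiE_def extensional_def fun_eq_iff)

lemma bound1:
  assumes u: "u \<in> space P"
  shows "(SUP g\<in>G. ennreal \<bar>Av g u - Eg g\<bar>) \<le> (\<Sum>m<K. \<integral>\<^sup>+u'. D m (u, u') \<partial>P)"
proof (rule SUP_least)
  fix g assume g: "g \<in> G"
  define f where "f m u' = Av g (W m (u, u'))" for m u'
  have Pu[measurable]: "(\<lambda>u'. (u, u')) \<in> P \<rightarrow>\<^sub>M PP"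
    unfolding PP_def using u by (rule measurable_Pair1')
  have fm[measurable]: "f m \<in> borel_measurable P" for m
    unfolding f_def using g by measurable
  have "integrable P (Av g)" by (rule Av_int(1)[OF g])
  moreover have "integrable P (f 0) \<longleftrightarrow> integrable P (Av g)"
    using g by (intro Bochner_Integration.integrable_cong) (auto simp: f_def W0)
  ultimately have f0: "integrable P (f 0)" by simp
  have "(\<integral>u'. f 0 u' \<partial>P) = (\<integral>u'. Av g u' \<partial>P)"
    by (intro Bochner_Integration.integral_cong) (auto simp: f_def W0)
  also have "\<dots> = Eg g" by (rule Av_int(2)[OF g])
  finally have ef0: "(\<integral>u'. f 0 u' \<partial>P) = Eg g" .
  have "ennreal \<bar>Av g u - (\<integral>u'. f 0 u' \<partial>P)\<bar> \<le> (\<Sum>m<K. \<integral>\<^sup>+u'. ennreal \<bar>f (Suc m) u' - f m u'\<bar> \<partial>P)"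
    by (rule telescope[where f=f, OF P_prob fm f0]) (simp add: f_def WK[OF u])
  also have "\<dots> \<le> (\<Sum>m<K. \<integral>\<^sup>+u'. D m (u, u') \<partial>P)"
    unfolding f_def D_def using g by (intro sum_mono nn_integral_mono SUP_upper2[OF g]) auto
  finally show "ennreal \<bar>Av g u - Eg g\<bar> \<le> (\<Sum>m<K. \<integral>\<^sup>+u'. D m (u, u') \<partial>P)"
    unfolding ef0 .
qed

lemma bound2:
  assumes u: "u \<in> space P"
  shows "psi \<Phi> (SUP g\<in>G. ennreal \<bar>Av g u - Eg g\<bar>) \<le> (\<Sum>m<K. \<integral>\<^sup>+u'. psi \<Phi> (of_nat K * D m (u, u')) \<partial>P) / of_nat K"
proof -
  have Pu[measurable]: "(\<lambda>u'. (u, u')) \<in> P \<rightarrow>\<^sub>M PP"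
    unfolding PP_def using u by (rule measurable_Pair1')
  define y where "y m = (\<integral>\<^sup>+u'. D m (u, u') \<partial>P)" for m
  have Kne: "(of_nat K :: ennreal) \<noteq> 0" using K_pos by simp
  have "(\<Sum>m<K. y m) = (\<Sum>m<K. of_nat K * y m) / of_nat (card {..<K})"
  proof -
    have "(\<Sum>m<K. of_nat K * y m) = (\<Sum>m<K. y m) * of_nat K"
      by (simp add: sum_distrib_left mult.commute)
    then show ?thesis using Kne by (simp add: ennreal_mult_divide_eq)
  qed
  then have "psi \<Phi> (SUP g\<in>G. ennreal \<bar>Av g u - Eg g\<bar>) \<le> psi \<Phi> ((\<Sum>m<K. of_nat K * y m) / of_nat (card {..<K}))"
    using bound1[OF u] by (intro monoD[OF psi_mono[OF \<Phi>_mono]]) (simp add: y_def)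
  also have "\<dots> \<le> (\<Sum>m<K. psi \<Phi> (of_nat K * y m)) / of_nat (card {..<K})"
    using K_pos by (intro psi_avg[OF \<Phi>_mono \<Phi>_convex]) auto
  also have "\<dots> \<le> (\<Sum>m<K. \<integral>\<^sup>+u'. psi \<Phi> (of_nat K * D m (u, u')) \<partial>P) / of_nat K"
  proof -
    have "psi \<Phi> (of_nat K * y m) \<le> (\<integral>\<^sup>+u'. psi \<Phi> (of_nat K * D m (u, u')) \<partial>P)" for m
    proof -
      have "psi \<Phi> (of_nat K * y m) = psi \<Phi> (\<integral>\<^sup>+u'. of_nat K * D m (u, u') \<partial>P)"
        unfolding y_def by (subst nn_integral_cmult) auto
      also have "\<dots> \<le> (\<integral>\<^sup>+u'. psi \<Phi> (of_nat K * D m (u, u')) \<partial>P)"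
        by (rule psi_jensen[OF \<Phi>_mono \<Phi>_convex P_prob]) measurable
      finally show ?thesis .
    qed
    then show ?thesis by (simp add: sum_mono divide_right_mono_ennreal)
  qed
  finally show ?thesis .
qed

end

lemma mono_ennreal_meas:
  fixes f :: "ennreal \<Rightarrow> ennreal"
  assumes mono: "mono f"
  shows "f \<in> borel_measurable borel"
proof (rule borel_measurableI_greater)
  fix a :: ennreal
  define S where "S = {x. a < f x}"
  have up: "x \<in> S \<Longrightarrow> x \<le> y \<Longrightarrow> y \<in> S" for x y
    using monoD[OF mono] by (auto simp: S_def intro: less_le_trans)
  have "S \<in> sets borel"
  proof (cases "S = {}")
    case False
    define b where "b = Inf S"
    have 1: "{b<..} \<subseteq> S"
    proof
      fix x assume "x \<in> {b<..}"
      then have "Inf S < x" by (simp add: b_def)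
      then obtain s where "s \<in> S" "s < x" by (auto simp: Inf_less_iff)
      then show "x \<in> S" using up by auto
    qed
    have 2: "S \<subseteq> {b..}" by (auto simp: b_def intro: Inf_lower)
    have "S = {b<..} \<union> (S \<inter> {b})" using 1 2 by (auto simp: less_le)
    moreover have "S \<inter> {b} \<in> sets borel"
      by (cases "b \<in> S") (auto simp: Int_absorb1 Int_absorb2)
    ultimately show ?thesis by (metis sets.Un borel_open open_greaterThan)
  qed simp
  then show "{x \<in> space borel. a < f x} \<in> sets borel" by (simp add: S_def)
qed

context L begin

lemma psi_meas[measurable]: "psi \<Phi> \<in> borel_measurable borel"
  by (rule mono_ennreal_meas[OF psi_mono[OF \<Phi>_mono]])

lemma lhs_bound:
  "(\<integral>\<^sup>+\<omega>. psi \<Phi> (SUP g\<in>G. ennreal \<bar>(1 / NC) * (\<Sum>j\<in>Bx. g (Z j \<omega>)) - Eg g\<bar>) \<partial>M)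
    \<le> (\<Sum>m<K. \<integral>\<^sup>+z. psi \<Phi> (of_nat K * D m z) \<partial>PP) / of_nat K"
proof -
  interpret P: prob_space P by (rule P_prob)
  define R where "R u = (\<Sum>m<K. \<integral>\<^sup>+u'. psi \<Phi> (of_nat K * D m (u, u')) \<partial>P) / of_nat K" for u
  have hm[measurable]: "(\<lambda>z. psi \<Phi> (of_nat K * D m z)) \<in> borel_measurable (P \<Otimes>\<^sub>M P)" for m
    unfolding PP_def[symmetric] by measurable
  have Rm[measurable]: "R \<in> borel_measurable P"
  proof -
    have [measurable]: "(\<lambda>u. \<integral>\<^sup>+u'. psi \<Phi> (of_nat K * D m (u, u')) \<partial>P) \<in> borel_measurable P" for m
      using P.borel_measurable_nn_integral_fst[OF hm[of m]] by simp
    show ?thesis unfolding R_def by measurable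
  qed
  have "(\<integral>\<^sup>+\<omega>. psi \<Phi> (SUP g\<in>G. ennreal \<bar>(1 / NC) * (\<Sum>j\<in>Bx. g (Z j \<omega>)) - Eg g\<bar>) \<partial>M)
      = (\<integral>\<^sup>+\<omega>. psi \<Phi> (SUP g\<in>G. ennreal \<bar>Av g (Ug \<omega>) - Eg g\<bar>) \<partial>M)"
    using Z_AE by (intro nn_integral_cong_AE) (auto simp: Av_def elim!: eventually_mono)
  also have "\<dots> \<le> (\<integral>\<^sup>+\<omega>. R (Ug \<omega>) \<partial>M)"
    unfolding R_def by (intro nn_integral_mono bound2) (rule measurable_space[OF Ug_meas])
  also have "\<dots> = (\<integral>\<^sup>+u. R u \<partial>P)"
    using nn_integral_distr[OF Ug_meas, of R] distr_Ug Rm by simp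
  also have "\<dots> = (\<Sum>m<K. \<integral>\<^sup>+u. \<integral>\<^sup>+u'. psi \<Phi> (of_nat K * D m (u, u')) \<partial>P \<partial>P) / of_nat K"
  proof -
    have [measurable]: "(\<lambda>u. \<integral>\<^sup>+u'. psi \<Phi> (of_nat K * D m (u, u')) \<partial>P) \<in> borel_measurable P" for m
      using P.borel_measurable_nn_integral_fst[OF hm[of m]] by simp
    show ?thesis unfolding R_def
      by (subst nn_integral_divide, measurable, subst nn_integral_sum) auto
  qed
  also have "\<dots> = (\<Sum>m<K. \<integral>\<^sup>+z. psi \<Phi> (of_nat K * D m z) \<partial>PP) / of_nat K"
    unfolding PP_def by (simp add: P.nn_integral_fst[OF hm])
  finally show ?thesis .
qed

end

context L begin

lemma take_Suc_es: "m < K \<Longrightarrow> set (take (Suc m) es) = insert (es!m) (set (take m es))"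
  by (simp add: take_Suc_conv_app_nth K_def)

lemma es_notin: "m < K \<Longrightarrow> es!m \<notin> set (take m es)"
proof
  assume m: "m < K" and "es!m \<in> set (take m es)"
  then obtain i where i: "i < m" "take m es ! i = es ! m" by (auto simp: in_set_conv_nth)
  then have "es ! i = es ! m" by simp
  with es(2) m i(1) show False by (simp add: K_def nth_eq_iff_index_eq)
qed

lemma esm_E0: "m < K \<Longrightarrow> es!m \<in> E0"
  using es(1) by (auto simp: K_def)

lemma W_at: "c \<in> II \<Longrightarrow> W n z c = (if pat c \<in> set (take n es) then fst z c else snd z c)"
  by (simp add: W_def mix_def Bm_def)

lemma sw_at: "c \<in> II \<Longrightarrow> fst (sw II S z) c = (if c \<in> S then snd z c else fst z c)"
  "c \<in> II \<Longrightarrow> snd (sw II S z) c = (if c \<in> S then fst z c else snd z c)"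
  by (simp_all add: sw_def)

lemma sw_term:
  fixes s :: "('k \<Rightarrow> nat) \<Rightarrow> real" and g :: "'b \<Rightarrow> real"
  assumes m: "m < K" and j: "j \<in> Bx" and s: "s (odot j (es!m)) \<in> {-1, 1}"
    and S: "S = {c. pat c = es!m \<and> s c = -1}"
  shows "g (Tz j (W (Suc m) (sw II S z))) - g (Tz j (W m (sw II S z)))
       = s (odot j (es!m)) * (g (Tz j (W (Suc m) z)) - g (Tz j (W m z)))"
proof -
  define e where "e = es!m"
  have jJ: "j \<in> J1" using j Bx_J1 by auto
  have e: "e \<in> E0" using esm_E0[OF m] by (simp add: e_def)
  have inS: "odot j e' \<in> S \<longleftrightarrow> e' = e \<and> s (odot j e') = -1" if "e' \<in> E0" for e'
    using pat_odot[OF jJ that] by (simp add: S e_def)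
  have tk: "e' \<in> set (take (Suc m) es) \<longleftrightarrow> e' = e \<or> e' \<in> set (take m es)" for e'
    using take_Suc_es[OF m] by (auto simp: e_def)
  have nin: "e \<notin> set (take m es)" using es_notin[OF m] by (simp add: e_def)
  show ?thesis
  proof (cases "s (odot j e) = 1")
    case True
    have "Tz j (W n (sw II S z)) = Tz j (W n z)" for n
    proof (rule Tz_cong)
      fix e' assume e': "e' \<in> E0"
      have "odot j e' \<notin> S"
      proof
        assume "odot j e' \<in> S"
        then have "e' = e" "s (odot j e') = -1" using inS[OF e'] by auto
        then have "s (odot j e) = -1" by simp
        with True show False by simp
      qed
      then show "W n (sw II S z) (odot j e') = W n z (odot j e')"
        using odot_II[OF j e'] by (simp add: W_at sw_at)
    qed
    then show ?thesis using True by (simp add: e_def)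
  next
    case False
    then have sm: "s (odot j e) = -1" using s by (auto simp: e_def)
    have 1: "Tz j (W (Suc m) (sw II S z)) = Tz j (W m z)"
    proof (rule Tz_cong)
      fix e' assume e': "e' \<in> E0"
      show "W (Suc m) (sw II S z) (odot j e') = W m z (odot j e')"
      proof (cases "e' = e")
        case True
        then show ?thesis using odot_II[OF j e'] inS[OF e'] sm nin pat_odot[OF jJ e'] tk
          by (simp add: W_at sw_at)
      next
        case False
        then show ?thesis using odot_II[OF j e'] inS[OF e'] pat_odot[OF jJ e'] tk[of e']
          by (simp add: W_at sw_at)
      qed
    qed
    have 2: "Tz j (W m (sw II S z)) = Tz j (W (Suc m) z)"
    proof (rule Tz_cong)
      fix e' assume e': "e' \<in> E0"
      show "W m (sw II S z) (odot j e') = W (Suc m) z (odot j e')"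
      proof (cases "e' = e")
        case True
        then show ?thesis using odot_II[OF j e'] inS[OF e'] sm nin pat_odot[OF jJ e'] tk
          by (simp add: W_at sw_at)
      next
        case False
        then show ?thesis using odot_II[OF j e'] inS[OF e'] pat_odot[OF jJ e'] tk[of e']
          by (simp add: W_at sw_at)
      qed
    qed
    show ?thesis unfolding 1 2 using sm by (simp add: e_def)
  qed
qed

lemma D_sw:
  assumes m: "m < K" and s: "\<forall>c\<in>II. s c \<in> {-1, 1}"
    and S: "S = {c. pat c = es!m \<and> s c = -1}"
  shows "D m (sw II S z) \<le> X (es!m) s (W (Suc m) z) + X (es!m) s (W m z)"
  unfolding D_def
proof (rule SUP_least)
  fix g assume g: "g \<in> G"
  define a where "a = (1 / NC) * (\<Sum>j\<in>Bx. s (odot j (es!m)) * g (Tz j (W (Suc m) z)))"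
  define b where "b = (1 / NC) * (\<Sum>j\<in>Bx. s (odot j (es!m)) * g (Tz j (W m z)))"
  have "Av g (W (Suc m) (sw II S z)) - Av g (W m (sw II S z))
      = (1 / NC) * (\<Sum>j\<in>Bx. g (Tz j (W (Suc m) (sw II S z))) - g (Tz j (W m (sw II S z))))"
    by (simp add: Av_def sum_subtractf right_diff_distrib)
  also have "\<dots> = (1 / NC) * (\<Sum>j\<in>Bx. s (odot j (es!m)) * (g (Tz j (W (Suc m) z)) - g (Tz j (W m z))))"
    using sw_term[OF m _ _ S] s odot_II esm_E0[OF m] by (intro arg_cong[where f="\<lambda>x. (1 / NC) * x"] sum.cong) auto
  also have "\<dots> = a - b"
    by (simp add: a_def b_def sum_subtractf right_diff_distrib)
  finally have eq: "Av g (W (Suc m) (sw II S z)) - Av g (W m (sw II S z)) = a - b" .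
  have "ennreal \<bar>a - b\<bar> \<le> ennreal (\<bar>a\<bar> + \<bar>b\<bar>)" by (intro ennreal_leI) simp
  also have "\<dots> = ennreal \<bar>a\<bar> + ennreal \<bar>b\<bar>" by (simp add: ennreal_plus)
  also have "\<dots> \<le> X (es!m) s (W (Suc m) z) + X (es!m) s (W m z)"
    unfolding X_def a_def b_def using g by (intro add_mono SUP_upper)
  finally show "ennreal \<bar>Av g (W (Suc m) (sw II S z)) - Av g (W m (sw II S z))\<bar>
      \<le> X (es!m) s (W (Suc m) z) + X (es!m) s (W m z)" unfolding eq .
qed

end

context L begin

lemma psi_two:
  "psi \<Phi> (of_nat K * (a + b)) \<le> (psi \<Phi> (2 * of_nat K * a) + psi \<Phi> (2 * of_nat K * b)) / 2"
proof -
  define y where "y i = (if i = (0::nat) then 2 * of_nat K * a else 2 * of_nat K * b)" for i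
  have "psi \<Phi> ((\<Sum>i<2. y i) / of_nat (card {..<2::nat})) \<le> (\<Sum>i<2. psi \<Phi> (y i)) / of_nat (card {..<2::nat})"
    by (rule psi_avg[OF \<Phi>_mono \<Phi>_convex]) (auto simp: lessThan_empty_iff)
  moreover have "(\<Sum>i<2. y i) / of_nat (card {..<2::nat}) = of_nat K * (a + b)"
  proof -
    have "(\<Sum>i<2. y i) = (of_nat K * (a + b)) * 2"
      by (simp add: y_def numeral_2_eq_2 algebra_simps)
    then show ?thesis by (simp add: ennreal_mult_divide_eq)
  qed
  moreover have "(\<Sum>i<2. psi \<Phi> (y i)) = psi \<Phi> (2 * of_nat K * a) + psi \<Phi> (2 * of_nat K * b)"
    by (simp add: y_def numeral_2_eq_2)
  ultimately show ?thesis by simp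
qed

lemma swap_fixed_s:
  assumes m: "m < K" and s: "\<forall>c\<in>II. s c \<in> {-1, 1}"
  shows "(\<integral>\<^sup>+z. psi \<Phi> (of_nat K * D m z) \<partial>PP) \<le> (\<integral>\<^sup>+u. psi \<Phi> (2 * of_nat K * X (es!m) s u) \<partial>P)"
proof -
  define S where "S = {c. pat c = es!m \<and> s c = -1}"
  define I where "I = (\<integral>\<^sup>+u. psi \<Phi> (2 * of_nat K * X (es!m) s u) \<partial>P)"
  have hm[measurable]: "(\<lambda>z. psi \<Phi> (of_nat K * D m z)) \<in> borel_measurable (PiM II (\<lambda>_. Nu) \<Otimes>\<^sub>M PiM II (\<lambda>_. Nu))"
    unfolding P_def[symmetric] PP_def[symmetric] by measurable
  have hx[measurable]: "(\<lambda>u. psi \<Phi> (2 * of_nat K * X (es!m) s u)) \<in> borel_measurable (PiM II (\<lambda>_. Nu))"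
    unfolding P_def[symmetric] by measurable
  have gh: "(\<integral>\<^sup>+z. psi \<Phi> (2 * of_nat K * X (es!m) s (W n z)) \<partial>PP) = I" for n
    unfolding PP_def P_def W_def I_def by (rule ghost[OF Nu_prob finite_II hx])
  have "(\<integral>\<^sup>+z. psi \<Phi> (of_nat K * D m z) \<partial>PP) = (\<integral>\<^sup>+z. psi \<Phi> (of_nat K * D m (sw II S z)) \<partial>PP)"
    unfolding PP_def P_def by (rule swap_inv[OF Nu_prob finite_II hm, symmetric])
  also have "\<dots> \<le> (\<integral>\<^sup>+z. (psi \<Phi> (2 * of_nat K * X (es!m) s (W (Suc m) z)) + psi \<Phi> (2 * of_nat K * X (es!m) s (W m z))) / 2 \<partial>PP)"
  proof (rule nn_integral_mono)
    fix z
    have "psi \<Phi> (of_nat K * D m (sw II S z)) \<le> psi \<Phi> (of_nat K * (X (es!m) s (W (Suc m) z) + X (es!m) s (W m z)))"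
      by (intro monoD[OF psi_mono[OF \<Phi>_mono]] mult_left_mono D_sw[OF m s S_def]) simp
    also have "\<dots> \<le> (psi \<Phi> (2 * of_nat K * X (es!m) s (W (Suc m) z)) + psi \<Phi> (2 * of_nat K * X (es!m) s (W m z))) / 2"
      by (rule psi_two)
    finally show "psi \<Phi> (of_nat K * D m (sw II S z)) \<le> \<dots>" .
  qed
  also have "\<dots> = ((\<integral>\<^sup>+z. psi \<Phi> (2 * of_nat K * X (es!m) s (W (Suc m) z)) \<partial>PP) + (\<integral>\<^sup>+z. psi \<Phi> (2 * of_nat K * X (es!m) s (W m z)) \<partial>PP)) / 2"
    by (subst nn_integral_divide, measurable, subst nn_integral_add) auto
  also have "\<dots> = I" unfolding gh by (simp add: mult_2_right[symmetric] ennreal_mult_divide_eq mult.commute)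
  finally show ?thesis unfolding I_def .
qed

lemma eps_meas[measurable]: "(\<lambda>\<omega> c. \<epsilon> c \<omega>) \<in> M \<rightarrow>\<^sub>M PiM UNIV (\<lambda>_. borel :: real measure)"
proof -
  have "(\<lambda>\<omega>. \<lambda>c\<in>UNIV. \<epsilon> c \<omega>) \<in> M \<rightarrow>\<^sub>M PiM UNIV (\<lambda>_. borel :: real measure)"
    by (rule measurable_restrict) (rule \<epsilon>_meas)
  then show ?thesis by (simp only: restrict_UNIV)
qed

lemma Le_prob: "prob_space Le"
  unfolding Le_def using M by (rule prob_space.prob_space_distr) (rule eps_meas)

lemma eps_AE: "AE s in Le. \<forall>c\<in>II. s c \<in> {-1, 1}"
proof -
  interpret prob_space M by (rule M)
  have [measurable]: "\<epsilon> c \<in> borel_measurable M" for c by (rule \<epsilon>_meas)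
  have ae1: "AE \<omega> in M. \<epsilon> c \<omega> \<in> {-1, 1}" for c
  proof -
    have "prob ({\<omega> \<in> space M. \<epsilon> c \<omega> = 1} \<union> {\<omega> \<in> space M. \<epsilon> c \<omega> = -1})
        = prob {\<omega> \<in> space M. \<epsilon> c \<omega> = 1} + prob {\<omega> \<in> space M. \<epsilon> c \<omega> = -1}"
      by (rule finite_measure_Union) auto
    also have "\<dots> = 1" using \<epsilon>_rad[of c] by simp
    moreover have "{\<omega> \<in> space M. \<epsilon> c \<omega> = 1} \<union> {\<omega> \<in> space M. \<epsilon> c \<omega> = -1} = {\<omega> \<in> space M. \<epsilon> c \<omega> \<in> {-1, 1}}"
      by auto
    ultimately have "prob {\<omega> \<in> space M. \<epsilon> c \<omega> \<in> {-1, 1}} = 1"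
      by simp
    from AE_prob_1[OF this] show ?thesis by (rule eventually_mono) simp
  qed
  have "AE \<omega> in M. \<forall>c\<in>II. \<epsilon> c \<omega> \<in> {-1, 1}"
    using finite_II ae1 by (intro AE_finite_allI) auto
  then show ?thesis
    unfolding Le_def by (subst AE_distr_iff) (auto simp: finite_II)
qed

lemma swap_step:
  assumes m: "m < K"
  shows "(\<integral>\<^sup>+z. psi \<Phi> (of_nat K * D m z) \<partial>PP) \<le> (\<integral>\<^sup>+s. \<integral>\<^sup>+u. psi \<Phi> (2 * of_nat K * X (es!m) s u) \<partial>P \<partial>Le)"
proof -
  interpret Le: prob_space Le by (rule Le_prob)
  have "(\<integral>\<^sup>+z. psi \<Phi> (of_nat K * D m z) \<partial>PP) = (\<integral>\<^sup>+s. (\<integral>\<^sup>+z. psi \<Phi> (of_nat K * D m z) \<partial>PP) \<partial>Le)"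
    by (simp add: Le.emeasure_space_1)
  also have "\<dots> \<le> (\<integral>\<^sup>+s. \<integral>\<^sup>+u. psi \<Phi> (2 * of_nat K * X (es!m) s u) \<partial>P \<partial>Le)"
    using eps_AE by (intro nn_integral_mono_AE) (auto elim!: eventually_mono intro: swap_fixed_s[OF m])
  finally show ?thesis .
qed

end

context L begin

lemma Xz_cong: "(\<And>j. j \<in> Bx \<Longrightarrow> z j = z' j) \<Longrightarrow> Xz e s z = Xz e s z'"
  unfolding Xz_def by (intro SUP_cong refl arg_cong[where f="\<lambda>x. ennreal \<bar>x\<bar>"] arg_cong[where f="\<lambda>x. (1/NC) * x"] sum.cong) auto

lemma Zr_meas[measurable]: "(\<lambda>\<omega>. restrict (\<lambda>j. Z j \<omega>) J1) \<in> M \<rightarrow>\<^sub>M PiM J1 (\<lambda>_. borel :: 'b measure)"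
  by (rule measurable_restrict) (rule Z_meas, simp add: J1_def)

lemma LZ_prob: "prob_space LZ"
  unfolding LZ_def using M by (rule prob_space.prob_space_distr) (rule Zr_meas)

lemma distr_Y:
  "distr M (PiM UNIV (\<lambda>_. borel :: real measure) \<Otimes>\<^sub>M PiM J1 (\<lambda>_. borel :: 'b measure))
      (\<lambda>\<omega>. ((\<lambda>c. \<epsilon> c \<omega>), restrict (\<lambda>j. Z j \<omega>) J1)) = Le \<Otimes>\<^sub>M LZ"
proof (rule pair_measure_eqI[symmetric])
  interpret prob_space M by (rule M)
  interpret Le: prob_space Le by (rule Le_prob)
  interpret LZ: prob_space LZ by (rule LZ_prob)
  show "sigma_finite_measure Le" by unfold_locales
  show "sigma_finite_measure LZ" by unfold_locales
  show "sets (Le \<Otimes>\<^sub>M LZ) = sets (distr M (PiM UNIV (\<lambda>_. borel :: real measure) \<Otimes>\<^sub>M PiM J1 (\<lambda>_. borel :: 'b measure))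
      (\<lambda>\<omega>. ((\<lambda>c. \<epsilon> c \<omega>), restrict (\<lambda>j. Z j \<omega>) J1)))"
    by (simp add: Le_def LZ_def)
  fix A B assume A: "A \<in> sets Le" and B: "B \<in> sets LZ"
  then have A': "A \<in> sets (PiM UNIV (\<lambda>_. borel :: real measure))" and B': "B \<in> sets (PiM J1 (\<lambda>_. borel :: 'b measure))"
    by (simp_all add: Le_def LZ_def)
  have "emeasure Le A = emeasure M {\<omega> \<in> space M. (\<lambda>c. \<epsilon> c \<omega>) \<in> A}"
    unfolding Le_def using A' by (subst emeasure_distr) (auto intro!: arg_cong[where f="emeasure M"])
  also have "\<dots> = ennreal (measure M {\<omega> \<in> space M. (\<lambda>c. \<epsilon> c \<omega>) \<in> A})"
    using A' by (intro emeasure_eq_measure)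
  finally have 1: "emeasure Le A = ennreal (measure M {\<omega> \<in> space M. (\<lambda>c. \<epsilon> c \<omega>) \<in> A})" .
  have "emeasure LZ B = emeasure M {\<omega> \<in> space M. restrict (\<lambda>j. Z j \<omega>) J1 \<in> B}"
    unfolding LZ_def using B' by (subst emeasure_distr) (auto intro!: arg_cong[where f="emeasure M"])
  also have "\<dots> = ennreal (measure M {\<omega> \<in> space M. restrict (\<lambda>j. Z j \<omega>) J1 \<in> B})"
    by (intro emeasure_eq_measure)
  finally have 2: "emeasure LZ B = ennreal (measure M {\<omega> \<in> space M. restrict (\<lambda>j. Z j \<omega>) J1 \<in> B})" .
  have "emeasure (distr M (PiM UNIV (\<lambda>_. borel :: real measure) \<Otimes>\<^sub>M PiM J1 (\<lambda>_. borel :: 'b measure))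
      (\<lambda>\<omega>. ((\<lambda>c. \<epsilon> c \<omega>), restrict (\<lambda>j. Z j \<omega>) J1))) (A \<times> B)
     = emeasure M {\<omega> \<in> space M. (\<lambda>c. \<epsilon> c \<omega>) \<in> A \<and> restrict (\<lambda>j. Z j \<omega>) J1 \<in> B}"
    using A' B' by (subst emeasure_distr) (auto intro!: arg_cong[where f="emeasure M"])
  also have "\<dots> = ennreal (measure M {\<omega> \<in> space M. (\<lambda>c. \<epsilon> c \<omega>) \<in> A \<and> restrict (\<lambda>j. Z j \<omega>) J1 \<in> B})"
    by (intro emeasure_eq_measure)
  also have "\<dots> = emeasure Le A * emeasure LZ B"
    unfolding 1 2 using \<epsilon>_Z_indep[OF A' B'[unfolded J1_def]] by (simp add: J1_def ennreal_mult)
  finally show "emeasure Le A * emeasure LZ B = emeasure (distr M (PiM UNIV (\<lambda>_. borel :: real measure) \<Otimes>\<^sub>M PiM J1 (\<lambda>_. borel :: 'b measure))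
      (\<lambda>\<omega>. ((\<lambda>c. \<epsilon> c \<omega>), restrict (\<lambda>j. Z j \<omega>) J1))) (A \<times> B)" by simp
qed

lemma rhs_eq:
  "(\<integral>\<^sup>+\<omega>. psi \<Phi> (cc * Xz e (\<lambda>c. \<epsilon> c \<omega>) (\<lambda>j. Z j \<omega>)) \<partial>M) = (\<integral>\<^sup>+s. \<integral>\<^sup>+u. psi \<Phi> (cc * X e s u) \<partial>P \<partial>Le)"
proof -
  interpret LZ: prob_space LZ by (rule LZ_prob)
  interpret Le: prob_space Le by (rule Le_prob)
  interpret LL: pair_sigma_finite Le LZ ..
  define F where "F y = psi \<Phi> (cc * Xz e (fst y) (snd y))" for y
  have Fm0: "F \<in> borel_measurable (PiM UNIV (\<lambda>_. borel :: real measure) \<Otimes>\<^sub>M PiM J1 (\<lambda>_. borel :: 'b measure))"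
  proof -
    have "(\<lambda>y. (\<lambda>(s, z). Xz e s z) y) \<in> borel_measurable (PiM UNIV (\<lambda>_. borel :: real measure) \<Otimes>\<^sub>M PiM J1 (\<lambda>_. borel :: 'b measure))"
      by (rule Xz_meas)
    then show ?thesis unfolding F_def case_prod_beta by measurable
  qed
  have setsLL: "sets (Le \<Otimes>\<^sub>M LZ) = sets (PiM UNIV (\<lambda>_. borel :: real measure) \<Otimes>\<^sub>M PiM J1 (\<lambda>_. borel :: 'b measure))"
    by (simp add: Le_def LZ_def)
  have Fm: "F \<in> borel_measurable (Le \<Otimes>\<^sub>M LZ)"
    by (subst measurable_cong_sets[OF setsLL refl]) (rule Fm0)
  have Ym: "(\<lambda>\<omega>. ((\<lambda>c. \<epsilon> c \<omega>), restrict (\<lambda>j. Z j \<omega>) J1)) \<in> M \<rightarrow>\<^sub>M (PiM UNIV (\<lambda>_. borel :: real measure) \<Otimes>\<^sub>M PiM J1 (\<lambda>_. borel :: 'b measure))"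
    by measurable
  have "(\<integral>\<^sup>+\<omega>. psi \<Phi> (cc * Xz e (\<lambda>c. \<epsilon> c \<omega>) (\<lambda>j. Z j \<omega>)) \<partial>M)
      = (\<integral>\<^sup>+\<omega>. F ((\<lambda>c. \<epsilon> c \<omega>), restrict (\<lambda>j. Z j \<omega>) J1) \<partial>M)"
    unfolding F_def by (intro nn_integral_cong arg_cong[where f="\<lambda>x. psi \<Phi> (cc * x)"]) (auto intro!: Xz_cong dest: subsetD[OF Bx_J1])
  also have "\<dots> = (\<integral>\<^sup>+y. F y \<partial>(Le \<Otimes>\<^sub>M LZ))"
    using nn_integral_distr[OF Ym, of F] Fm0 Fm distr_Y by simp
  also have "\<dots> = (\<integral>\<^sup>+s. \<integral>\<^sup>+z. F (s, z) \<partial>LZ \<partial>Le)"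
    by (rule LZ.nn_integral_fst[OF Fm, symmetric])
  also have "\<dots> = (\<integral>\<^sup>+s. \<integral>\<^sup>+u. psi \<Phi> (cc * X e s u) \<partial>P \<partial>Le)"
  proof (rule nn_integral_cong)
    fix s assume "s \<in> space Le"
    have sp: "s \<in> space (PiM UNIV (\<lambda>_. borel :: real measure))" by (simp add: space_PiM)
    have Fs: "(\<lambda>z. F (s, z)) \<in> borel_measurable (PiM J1 (\<lambda>_. borel :: 'b measure))"
      using measurable_compose[OF measurable_Pair1'[OF sp] Fm0] by simp
    have Xsm: "(\<lambda>u. psi \<Phi> (cc * X e s u)) \<in> borel_measurable P" by measurable
    have "(\<integral>\<^sup>+z. F (s, z) \<partial>LZ) = (\<integral>\<^sup>+\<omega>. F (s, restrict (\<lambda>j. Z j \<omega>) J1) \<partial>M)"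
      unfolding LZ_def using Fs by (subst nn_integral_distr) auto
    also have "\<dots> = (\<integral>\<^sup>+\<omega>. psi \<Phi> (cc * X e s (Ug \<omega>)) \<partial>M)"
      using Z_AE
    proof (intro nn_integral_cong_AE, elim eventually_mono)
      fix \<omega> assume "\<forall>j\<in>Bx. Z j \<omega> = Tz j (Ug \<omega>)"
      then show "F (s, restrict (\<lambda>j. Z j \<omega>) J1) = psi \<Phi> (cc * X e s (Ug \<omega>))"
        unfolding F_def X_Xz using Bx_J1 by (auto intro!: arg_cong[where f="\<lambda>x. psi \<Phi> (cc * x)"] Xz_cong)
    qed
    also have "\<dots> = (\<integral>\<^sup>+u. psi \<Phi> (cc * X e s u) \<partial>P)"
      using nn_integral_distr[OF Ug_meas, of "\<lambda>u. psi \<Phi> (cc * X e s u)"] Xsm distr_Ug by simp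
    finally show "(\<integral>\<^sup>+z. F (s, z) \<partial>LZ) = (\<integral>\<^sup>+u. psi \<Phi> (cc * X e s u) \<partial>P)" .
  qed
  finally show ?thesis .
qed

end

lemma lexp_psi: "lexp M (\<Phi> 0) (\<lambda>\<omega>. Phi_ext \<Phi> (f \<omega>)) = ereal (\<Phi> 0) + enn2ereal (\<integral>\<^sup>+\<omega>. psi \<Phi> (f \<omega>) \<partial>M)"
  by (simp add: lexp_def psi_def)

lemma enn2ereal_sum: "enn2ereal (\<Sum>e\<in>A. R e) = (\<Sum>e\<in>A. enn2ereal (R e))"
  by (induction A rule: infinite_finite_induct) (auto simp: plus_ennreal.rep_eq zero_ennreal.rep_eq)

lemma final_arith:
  fixes L :: ennreal and R :: "'e \<Rightarrow> ennreal"
  assumes A: "finite A" "card A = K" "K > 0"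
    and le: "L \<le> (\<Sum>e\<in>A. R e) / of_nat K"
  shows "ereal c + enn2ereal L \<le> ereal (1 / real K) * (\<Sum>e\<in>A. ereal c + enn2ereal (R e))"
proof -
  have "(\<Sum>e\<in>A. ereal c + enn2ereal (R e)) = (\<Sum>e\<in>A. ereal c) + (\<Sum>e\<in>A. enn2ereal (R e))"
    by (rule sum.distrib)
  also have "(\<Sum>e\<in>A. ereal c) = ereal (real K * c)"
  proof -
    have "(\<Sum>e\<in>A. ereal c) = ereal (\<Sum>e\<in>A. c)" by (rule sum_ereal)
    also have "(\<Sum>e\<in>A. c) = real K * c" using A(2) by simp
    finally show ?thesis .
  qed
  finally have sum: "(\<Sum>e\<in>A. ereal c + enn2ereal (R e)) = ereal (real K * c) + enn2ereal (\<Sum>e\<in>A. R e)"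
    by (simp only: enn2ereal_sum)
  have Kp: "real K > 0" using A by simp
  show ?thesis
  proof (cases "(\<Sum>e\<in>A. R e) = \<top>")
    case True
    have "ereal (real K * c) + enn2ereal \<top> = \<infinity>" by simp
    moreover have "ereal (1 / real K) * \<infinity> = \<infinity>" using Kp by simp
    ultimately show ?thesis unfolding sum True by simp
  next
    case False
    obtain r where r: "(\<Sum>e\<in>A. R e) = ennreal r" "r \<ge> 0"
      using ennreal_cases[of "\<Sum>e\<in>A. R e"] False by blast
    have "(\<Sum>e\<in>A. R e) / of_nat K = ennreal r / ennreal (real K)"
      unfolding r(1) ennreal_of_nat_eq_real_of_nat ..
    also have "\<dots> = ennreal (r / real K)"
      by (rule divide_ennreal[OF r(2) Kp])
    finally have Lle: "L \<le> ennreal (r / real K)" using le by simp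
    have Lt: "L < \<top>" using le_less_trans[OF Lle ennreal_less_top] .
    define l where "l = enn2real L"
    have Ll: "L = ennreal l" unfolding l_def using Lt by (simp add: ennreal_enn2real less_top)
    have l0: "l \<ge> 0" by (simp add: l_def)
    have "l \<le> enn2real (ennreal (r / real K))" unfolding l_def
      by (rule enn2real_mono[OF Lle]) simp
    then have l3: "l \<le> r / real K" using r(2) Kp by simp
    have "ereal c + enn2ereal L = ereal (c + l)" using l0 unfolding Ll by simp
    also have "c + l \<le> 1 / real K * (real K * c + r)"
    proof -
      have "1 / real K * (real K * c + r) = c + r / real K" using Kp by (simp add: field_simps)
      then show ?thesis using l3 by linarith
    qed
    then have "ereal (c + l) \<le> ereal (1 / real K * (real K * c + r))" by simp
    also have "ereal (1 / real K * (real K * c + r)) = ereal (1 / real K) * (ereal (real K * c) + enn2ereal (\<Sum>e\<in>A. R e))"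
      unfolding r(1) enn2ereal_ennreal[OF r(2)] by simp
    finally show ?thesis unfolding sum .
  qed
qed


context L begin

theorem main:
  "lexp M (\<Phi> 0)
           (\<lambda>\<omega>. Phi_ext \<Phi> (SUP g\<in>G. ennreal \<bar>(1 / real (prod C UNIV)) *
              (\<Sum>j\<in>{j. \<forall>i. 1 \<le> j i \<and> j i \<le> C i}. g (Z j \<omega>))
              - (\<integral>\<omega>'. g (Z (\<lambda>_. 1) \<omega>') \<partial>M)\<bar>))
         \<le> ereal (1 / (2 ^ CARD('k) - 1)) *
           (\<Sum>e\<in>{e. (\<forall>i. e i \<le> 1) \<and> e \<noteq> (\<lambda>_. 0)}.
              lexp M (\<Phi> 0)
                (\<lambda>\<omega>. Phi_ext \<Phi> (ennreal (2 * (2 ^ CARD('k) - 1)) *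
                   (SUP g\<in>G. ennreal \<bar>(1 / real (prod C UNIV)) *
                      (\<Sum>j\<in>{j. \<forall>i. 1 \<le> j i \<and> j i \<le> C i}. \<epsilon> (odot j e) \<omega> * g (Z j \<omega>))\<bar>))))"
proof -
  define Lint where "Lint = (\<integral>\<^sup>+\<omega>. psi \<Phi> (SUP g\<in>G. ennreal \<bar>(1 / NC) * (\<Sum>j\<in>Bx. g (Z j \<omega>)) - Eg g\<bar>) \<partial>M)"
  define R where "R e = (\<integral>\<^sup>+\<omega>. psi \<Phi> ((2 * of_nat K) * Xz e (\<lambda>c. \<epsilon> c \<omega>) (\<lambda>j. Z j \<omega>)) \<partial>M)" for e
  have "Lint \<le> (\<Sum>m<K. \<integral>\<^sup>+z. psi \<Phi> (of_nat K * D m z) \<partial>PP) / of_nat K"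
    unfolding Lint_def by (rule lhs_bound)
  also have "\<dots> \<le> (\<Sum>m<K. R (es!m)) / of_nat K"
    unfolding R_def rhs_eq using swap_step by (intro divide_right_mono_ennreal sum_mono) auto
  also have "(\<Sum>m<K. R (es!m)) = (\<Sum>e\<in>E0. R e)"
    using sum.reindex_bij_betw[OF bij_betw_nth[OF es(2) refl refl], of R] es(1) by (simp add: K_def lessThan_atLeast0)
  finally have le: "Lint \<le> (\<Sum>e\<in>E0. R e) / of_nat K" .
  have 1: "lexp M (\<Phi> 0)
           (\<lambda>\<omega>. Phi_ext \<Phi> (SUP g\<in>G. ennreal \<bar>(1 / real (prod C UNIV)) *
              (\<Sum>j\<in>{j. \<forall>i. 1 \<le> j i \<and> j i \<le> C i}. g (Z j \<omega>))
              - (\<integral>\<omega>'. g (Z (\<lambda>_. 1) \<omega>') \<partial>M)\<bar>)) = ereal (\<Phi> 0) + enn2ereal Lint"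
    unfolding Lint_def NC_def Bx_def Eg_def lexp_def psi_def by (rule refl)
  have 2: "lexp M (\<Phi> 0)
                (\<lambda>\<omega>. Phi_ext \<Phi> (ennreal (2 * (2 ^ CARD('k) - 1)) *
                   (SUP g\<in>G. ennreal \<bar>(1 / real (prod C UNIV)) *
                      (\<Sum>j\<in>{j. \<forall>i. 1 \<le> j i \<and> j i \<le> C i}. \<epsilon> (odot j e) \<omega> * g (Z j \<omega>))\<bar>)))
         = ereal (\<Phi> 0) + enn2ereal (R e)" for e
  proof -
    have "ennreal (2 * (2 ^ CARD('k) - 1)) = 2 * of_nat K"
      by (simp add: K_real[symmetric] ennreal_mult ennreal_of_nat_eq_real_of_nat)
    then show ?thesis unfolding R_def Xz_def NC_def Bx_def lexp_def psi_def by simp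
  qed
  have 3: "(1 / (2 ^ CARD('k) - 1) :: real) = 1 / real K" by (simp add: K_real)
  show ?thesis
    unfolding 1 2 3 E0_def[symmetric]
    by (rule final_arith[OF finite_E0 K_card[symmetric] K_pos le])
qed

end

theorem lemma4:
  fixes M :: "'a measure"
    and Z :: "('k::finite \<Rightarrow> nat) \<Rightarrow> 'a \<Rightarrow> 'b::polish_space"
    and U :: "('k \<Rightarrow> nat) \<Rightarrow> 'a \<Rightarrow> real"
    and \<tau> :: "(('k \<Rightarrow> nat) \<Rightarrow> real) \<Rightarrow> 'b"
    and \<epsilon> :: "('k \<Rightarrow> nat) \<Rightarrow> 'a \<Rightarrow> real"
    and G :: "('b \<Rightarrow> real) set"
    and \<Phi> :: "real \<Rightarrow> real"
    and C :: "'k \<Rightarrow> nat"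
  assumes M: "prob_space M"
    and Z_meas: "\<And>j. (\<forall>i. 1 \<le> j i) \<Longrightarrow> Z j \<in> measurable M borel"
    and U_meas: "\<And>c. c \<noteq> (\<lambda>_. 0) \<Longrightarrow> U c \<in> borel_measurable M"
    and U_unif: "\<And>c. c \<noteq> (\<lambda>_. 0) \<Longrightarrow> distr M borel (U c) = uniform_measure lborel {0..1}"
    and U_indep: "prob_space.indep_vars M (\<lambda>_. borel) U {c. c \<noteq> (\<lambda>_. 0)}"
    and \<tau>_meas: "\<tau> \<in> measurable
        (Pi\<^sub>M {e. (\<forall>i. e i \<le> 1) \<and> e \<noteq> (\<lambda>_. 0)} (\<lambda>_. borel)) borel"
    and Z_repr: "AE \<omega> in M. \<forall>j. (\<forall>i. 1 \<le> j i) \<longrightarrow>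
        Z j \<omega> = \<tau> (restrict (\<lambda>e. U (odot j e) \<omega>) {e. (\<forall>i. e i \<le> 1) \<and> e \<noteq> (\<lambda>_. 0)})"
    and G_pm: "pointwise_measurable G"
    and G_meas: "\<And>g. g \<in> G \<Longrightarrow> g \<in> borel_measurable borel"
    and G_int: "\<And>g. g \<in> G \<Longrightarrow> integrable M (\<lambda>\<omega>. g (Z (\<lambda>_. 1) \<omega>))"
    and \<Phi>_mono: "mono_on {0..} \<Phi>"
    and \<Phi>_convex: "convex_on {0..} \<Phi>"
    and \<epsilon>_meas: "\<And>c. \<epsilon> c \<in> borel_measurable M"
    and \<epsilon>_rad: "\<And>c. measure M {\<omega> \<in> space M. \<epsilon> c \<omega> = 1} = 1/2
                 \<and> measure M {\<omega> \<in> space M. \<epsilon> c \<omega> = -1} = 1/2"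
    and \<epsilon>_indep: "prob_space.indep_vars M (\<lambda>_. borel) \<epsilon> UNIV"
    and \<epsilon>_Z_indep: "\<And>A B. A \<in> sets (Pi\<^sub>M UNIV (\<lambda>_. (borel :: real measure))) \<Longrightarrow>
        B \<in> sets (Pi\<^sub>M {j. \<forall>i. 1 \<le> j i} (\<lambda>_. (borel :: 'b measure))) \<Longrightarrow>
        measure M {\<omega> \<in> space M. (\<lambda>c. \<epsilon> c \<omega>) \<in> A \<and>
                      restrict (\<lambda>j. Z j \<omega>) {j. \<forall>i. 1 \<le> j i} \<in> B}
        = measure M {\<omega> \<in> space M. (\<lambda>c. \<epsilon> c \<omega>) \<in> A}
          * measure M {\<omega> \<in> space M. restrict (\<lambda>j. Z j \<omega>) {j. \<forall>i. 1 \<le> j i} \<in> B}"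
    and C_pos: "\<forall>i. 1 \<le> C i"
  shows "lexp M (\<Phi> 0)
           (\<lambda>\<omega>. Phi_ext \<Phi> (SUP g\<in>G. ennreal \<bar>(1 / real (prod C UNIV)) *
              (\<Sum>j\<in>{j. \<forall>i. 1 \<le> j i \<and> j i \<le> C i}. g (Z j \<omega>))
              - (\<integral>\<omega>'. g (Z (\<lambda>_. 1) \<omega>') \<partial>M)\<bar>))
         \<le> ereal (1 / (2 ^ CARD('k) - 1)) *
           (\<Sum>e\<in>{e. (\<forall>i. e i \<le> 1) \<and> e \<noteq> (\<lambda>_. 0)}.
              lexp M (\<Phi> 0)
                (\<lambda>\<omega>. Phi_ext \<Phi> (ennreal (2 * (2 ^ CARD('k) - 1)) *
                   (SUP g\<in>G. ennreal \<bar>(1 / real (prod C UNIV)) *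
                      (\<Sum>j\<in>{j. \<forall>i. 1 \<le> j i \<and> j i \<le> C i}. \<epsilon> (odot j e) \<omega> * g (Z j \<omega>))\<bar>))))"
proof -
  have "L M Z U \<tau> \<epsilon> G \<Phi> C"
    by (rule L.intro; fact)
  then show ?thesis by (rule L.main)
qed

end
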